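(* Let $\Omega$ be a finite subset of $\mathbb{Z}^d\setminus\{0\}$ invariant under all symmetries of $\mathbb{Z}^d$, let $\phi:\mathbb{Z}_{\ge 0}\to[0,\infty)$ satisfy $\phi(0)=\phi(1)=0$ and $\phi(a+b)\ge\phi(a)+\phi(b)$, and let $\rho$ be a probability mass function on $\Omega$ invariant under all symmetries of $\mathbb{Z}^d$. Then there exists a constant $C>0$ such that for every $n\in\mathbb{N}$, $$e^{-C\sqrt n}\,Z_n\le H_n\le Z_n.$$
   Context: A walk of length $n$ is a sequence $\gamma=(\gamma(i))_{i=0}^n$ in $\mathbb{Z}^d$ with $\gamma(i)-\gamma(i-1)\in\Omega$ for $0<i\le n$; $\mathrm{W}_n$ is the set of such walks with $\gamma(0)=0$. For $v\in\mathbb{Z}^d$, $l_v(\gamma)=\#\{k:\gamma(k)=v\}$, and $\sigma(\gamma)=\prod_{v}e^{-\phi(l_v(\gamma))}\prod_{i=1}^n\rho(\gamma(i)-\gamma(i-1))$. $Z_n=\sum_{\gamma\in\mathrm{W}_n}\sigma(\gamma)$. For $v\in\mathbb{Z}^d$, $x(v)$ denotes its first coordinate. A walk $\gamma\in\mathrm{W}_n$ is a bridge if $x(\gamma(0))<x(\gamma(i))\le x(\gamma(n))$ for all $1\le i\le n$; $\mathrm{B}_n$ is the set of bridges of length $n$ and $H_n=\sum_{\gamma\in\mathrm{B}_n}\sigma(\gamma)$. *)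

theory Defs
  imports Complex_Main
begin

text \<open>Points of Z^d are represented as functions nat => int that vanish
outside {..<d}. The first coordinate x(v) is v 0.\<close>

type_synonym pt = "nat \<Rightarrow> int"

definition in_Zd :: "nat \<Rightarrow> pt \<Rightarrow> bool" where
  "in_Zd d v \<longleftrightarrow> (\<forall>i\<ge>d. v i = 0)"

definition origin :: pt where
  "origin = (\<lambda>_. 0)"

definition xcoord :: "pt \<Rightarrow> int" where
  "xcoord v = v 0"

text \<open>Symmetries of Z^d fixing the origin: signed coordinate permutations.\<close>
definition sym_map :: "nat \<Rightarrow> (nat \<Rightarrow> nat) \<Rightarrow> (nat \<Rightarrow> int) \<Rightarrow> pt \<Rightarrow> pt" where
  "sym_map d p s v = (\<lambda>i. if i < d then s i * v (p i) else 0)"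

definition is_symmetry :: "nat \<Rightarrow> (pt \<Rightarrow> pt) \<Rightarrow> bool" where
  "is_symmetry d g \<longleftrightarrow> (\<exists>p s. bij_betw p {..<d} {..<d} \<and> (\<forall>i<d. s i = 1 \<or> s i = -1)
                          \<and> g = sym_map d p s)"

definition walks :: "pt set \<Rightarrow> nat \<Rightarrow> pt list set" where
  "walks \<Omega> n = {\<gamma>. length \<gamma> = Suc n \<and> \<gamma> ! 0 = origin \<and>
      (\<forall>i\<in>{1..n}. (\<lambda>j. (\<gamma> ! i) j - (\<gamma> ! (i - 1)) j) \<in> \<Omega>)}"

definition local_time :: "pt list \<Rightarrow> pt \<Rightarrow> nat" where
  "local_time \<gamma> v = card {k. k < length \<gamma> \<and> \<gamma> ! k = v}"

text \<open>Weight sigma: the product over all v of exp(-phi(l_v)) reduces to the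
visited sites since phi 0 = 0.\<close>
definition sigma :: "(nat \<Rightarrow> real) \<Rightarrow> (pt \<Rightarrow> real) \<Rightarrow> pt list \<Rightarrow> real" where
  "sigma \<phi> \<rho> \<gamma> = (\<Prod>v\<in>set \<gamma>. exp (- \<phi> (local_time \<gamma> v))) *
      (\<Prod>i=1..length \<gamma> - 1. \<rho> (\<lambda>j. (\<gamma> ! i) j - (\<gamma> ! (i - 1)) j))"

definition Zn :: "pt set \<Rightarrow> (nat \<Rightarrow> real) \<Rightarrow> (pt \<Rightarrow> real) \<Rightarrow> nat \<Rightarrow> real" where
  "Zn \<Omega> \<phi> \<rho> n = (\<Sum>\<gamma>\<in>walks \<Omega> n. sigma \<phi> \<rho> \<gamma>)"

definition bridges :: "pt set \<Rightarrow> nat \<Rightarrow> pt list set" where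
  "bridges \<Omega> n = {\<gamma>\<in>walks \<Omega> n. \<forall>i\<in>{1..n}.
      xcoord (\<gamma> ! 0) < xcoord (\<gamma> ! i) \<and> xcoord (\<gamma> ! i) \<le> xcoord (\<gamma> ! n)}"

definition Hn :: "pt set \<Rightarrow> (nat \<Rightarrow> real) \<Rightarrow> (pt \<Rightarrow> real) \<Rightarrow> nat \<Rightarrow> real" where
  "Hn \<Omega> \<phi> \<rho> n = (\<Sum>\<gamma>\<in>bridges \<Omega> n. sigma \<phi> \<rho> \<gamma>)"

end

theory Submission
  imports Defs "HOL-Library.Function_Algebras"
begin


lemma exp_le_one_minus:
  fixes \<delta> :: real assumes "0 \<le> \<delta>" "\<delta> \<le> 1/2"
  shows "exp (- 2 * \<delta>) \<le> 1 - \<delta>"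
proof -
  have "1 + 2 * \<delta> \<le> exp (2 * \<delta>)" by (rule exp_ge_add_one_self_aux) (use assms in simp)
  then have "exp (- 2 * \<delta>) \<le> 1 / (1 + 2 * \<delta>)"
    using assms by (simp add: exp_minus field_simps)
  also have "\<dots> \<le> 1 - \<delta>"
  proof -
    have "0 \<le> \<delta> * (1 - 2 * \<delta>)" using assms by (intro mult_nonneg_nonneg) auto
    then have "1 \<le> (1 - \<delta>) * (1 + 2 * \<delta>)" by (simp add: algebra_simps)
    then show ?thesis using assms by (simp add: field_simps)
  qed
  finally show ?thesis .
qed

lemma gen_bound:
  assumes M: "1 \<le> M"
  shows "\<exists>x::real. 0 < x \<and> x \<le> 1 \<and> (\<Prod>k\<in>{1..M}. 1 + x ^ k) / x ^ M \<le> exp (3 * sqrt M)"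
proof -
  define s where "s = sqrt (real M)"
  have s1: "1 \<le> s" using M by (simp add: s_def)
  define \<delta> where "\<delta> = 1 / (2 * s)"
  have d: "0 < \<delta>" "\<delta> \<le> 1/2" using s1 by (auto simp: \<delta>_def field_simps)
  define x where "x = 1 - \<delta>"
  have x: "0 < x" "x \<le> 1" "x < 1" using d by (auto simp: x_def)
  have "(\<Prod>k\<in>{1..M}. 1 + x ^ k) \<le> (\<Prod>k\<in>{1..M}. exp (x ^ k))"
  proof (rule prod_mono)
    fix k show "0 \<le> 1 + x ^ k \<and> 1 + x ^ k \<le> exp (x ^ k)"
      using x exp_ge_add_one_self[of "x ^ k"] by simp
  qed
  also have "\<dots> = exp (\<Sum>k\<in>{1..M}. x ^ k)" by (simp add: exp_sum)
  also have "(\<Sum>k\<in>{1..M}. x ^ k) \<le> (\<Sum>k\<le>M. x ^ k)"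
    by (rule sum_mono2) (use x in auto)
  also have "\<dots> = (1 - x ^ Suc M) / (1 - x)" using x sum_gp_basic[of x M] by (simp add: field_simps)
  also have "\<dots> \<le> 1 / (1 - x)" using x by (simp add: divide_right_mono)
  also have "1 / (1 - x) = 2 * s" using s1 by (simp add: x_def \<delta>_def)
  finally have P: "(\<Prod>k\<in>{1..M}. 1 + x ^ k) \<le> exp (2 * s)" by simp
  have "exp (- s) = exp (- 2 * \<delta>) ^ M"
  proof -
    have "2 * \<delta> * M = s" using s1 by (simp add: \<delta>_def s_def field_simps)
    then show ?thesis by (metis exp_of_nat_mult mult.commute mult_minus_left)
  qed
  also have "\<dots> \<le> x ^ M" using exp_le_one_minus[of \<delta>] d by (simp add: x_def power_mono)
  finally have X: "exp (- s) \<le> x ^ M" .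
  have xm: "0 < x ^ M" using x by simp
  have "(\<Prod>k\<in>{1..M}. 1 + x ^ k) / x ^ M \<le> exp (2 * s) / exp (- s)"
    using P X xm by (intro frac_le) auto
  also have "\<dots> = exp (3 * s)" by (simp add: exp_minus field_simps exp_add[symmetric])
  finally show ?thesis using x by (auto simp: s_def)
qed



fun steps :: "pt list \<Rightarrow> pt list" where
  "steps (a # b # l) = (b - a) # steps (b # l)"
| "steps _ = []"

lemma local_time_count: "local_time \<gamma> v = count_list \<gamma> v"
  unfolding local_time_def count_list_eq_length_filter length_filter_conv_card
  by (simp add: eq_commute)

lemma length_steps[simp]: "length (steps l) = length l - 1"
  by (induction l rule: steps.induct) auto

lemma nth_steps: "i < length l - 1 \<Longrightarrow> steps l ! i = l ! Suc i - l ! i"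
proof (induction l arbitrary: i rule: steps.induct)
  case (1 a b l)
  then show ?case by (cases i) auto
qed auto

lemma diff_fun: "(\<lambda>j. (x::pt) j - y j) = x - y"
  by (simp add: fun_diff_def)

lemma prod_list_nth: "prod_list (map f xs) = (\<Prod>i<length xs. (f (xs ! i) :: real))"
proof (induction xs)
  case (Cons a xs)
  then show ?case by (simp add: prod.lessThan_Suc_shift del: prod.lessThan_Suc)
qed simp

lemma prod_steps: "(\<Prod>i=1..length l - 1. (f::pt\<Rightarrow>real) (l ! i - l ! (i - 1))) = prod_list (map f (steps l))"
proof -
  have "prod_list (map f (steps l)) = (\<Prod>i<length l - 1. f (steps l ! i))"
    by (simp add: prod_list_nth)
  also have "\<dots> = (\<Prod>i<length l - 1. f (l ! Suc i - l ! i))"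
    by (rule prod.cong) (auto simp: nth_steps)
  also have "\<dots> = (\<Prod>i=1..length l - 1. f (l ! i - l ! (i - 1)))"
  proof -
    have "(\<Prod>i=1..length l - 1. f (l ! i - l ! (i - 1))) = (\<Prod>i\<in>Suc ` {..<length l - 1}. f (l ! i - l ! (i - 1)))"
    proof -
      have "Suc ` {..<length l - 1} = {1..length l - 1}"
        using image_Suc_lessThan by auto
      then show ?thesis by simp
    qed
    also have "\<dots> = (\<Prod>i<length l - 1. f (l ! Suc i - l ! i))"
      by (subst prod.reindex) auto
    finally show ?thesis by simp
  qed
  finally show ?thesis by simp
qed

lemma set_steps_iff: "set (steps l) \<subseteq> S \<longleftrightarrow> (\<forall>i\<in>{1..length l - 1}. l ! i - l ! (i - 1) \<in> S)"
proof -
  have "set (steps l) = (\<lambda>i. l ! Suc i - l ! i) ` {..<length l - 1}"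
    by (auto simp: in_set_conv_nth image_iff nth_steps[symmetric])
  also have "\<dots> = (\<lambda>i. l ! i - l ! (i - 1)) ` {1..length l - 1}"
  proof -
    have "Suc ` {..<length l - 1} = {1..length l - 1}"
      using image_Suc_lessThan by auto
    then have "(\<lambda>i. l ! i - l ! (i - 1)) ` {1..length l - 1} = (\<lambda>i. l ! i - l ! (i - 1)) ` Suc ` {..<length l - 1}" by simp
    then show ?thesis by (simp add: image_image)
  qed
  finally show ?thesis by auto
qed

lemma walks_iff: "\<gamma> \<in> walks \<Omega> n \<longleftrightarrow> length \<gamma> = Suc n \<and> hd \<gamma> = origin \<and> set (steps \<gamma>) \<subseteq> \<Omega>"
  unfolding walks_def set_steps_iff diff_fun
  by (cases \<gamma>) auto

definition Psi :: "(nat \<Rightarrow> real) \<Rightarrow> pt list \<Rightarrow> real" where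
  "Psi \<phi> l = (\<Prod>v\<in>set l. exp (- \<phi> (count_list l v)))"

lemma sigma_alt: "sigma \<phi> \<rho> l = Psi \<phi> l * prod_list (map \<rho> (steps l))"
  unfolding sigma_def Psi_def local_time_count prod_steps[symmetric] diff_fun ..


lemma steps_Cons: "l \<noteq> [] \<Longrightarrow> steps (a # l) = (hd l - a) # steps l"
  by (cases l) auto

lemma steps_append: "xs \<noteq> [] \<Longrightarrow> ys \<noteq> [] \<Longrightarrow> steps (xs @ ys) = steps xs @ (hd ys - last xs) # steps ys"
proof (induction xs)
  case (Cons a xs)
  show ?case
  proof (cases xs)
    case Nil
    then show ?thesis using Cons by (cases ys) auto
  next
    case (Cons b r)
    then show ?thesis using Cons.IH Cons.prems by auto
  qed
qed auto

lemma steps_join: "p \<noteq> [] \<Longrightarrow> q \<noteq> [] \<Longrightarrow> last p = hd q \<Longrightarrow> steps (p @ tl q) = steps p @ steps q"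
proof (cases "tl q")
  case Nil
  assume "q \<noteq> []"
  then obtain a where "q = [a]" using Nil by (cases q) auto
  then show ?thesis by simp
next
  case (Cons b r)
  assume a: "p \<noteq> []" "q \<noteq> []" "last p = hd q"
  then have q: "q = hd q # b # r" using Cons by (cases q) auto
  show ?thesis using a Cons steps_append[of p "tl q"] by (subst (2) q) simp
qed

lemma steps_map: "(\<And>a b. f b - f a = L (b - a)) \<Longrightarrow> steps (map f l) = map L (steps l)"
  by (induction l rule: steps.induct) auto

lemma steps_rev: "steps (rev l) = rev (map uminus (steps l))"
proof (induction l rule: steps.induct)
  case (1 a b l)
  have "steps (rev (a # b # l)) = steps (rev (b # l) @ [a])" by simp
  also have "\<dots> = steps (rev (b # l)) @ [a - b]"
    by (subst steps_append) auto
  finally show ?case using 1 by (simp add: fun_eq_iff)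
qed auto

lemma steps_snoc: "xs \<noteq> [] \<Longrightarrow> steps (xs @ [a]) = steps xs @ [a - last xs]"
  by (subst steps_append) auto

context
  fixes \<phi> :: "nat \<Rightarrow> real"
  assumes sup: "\<And>a b. \<phi> a + \<phi> b \<le> \<phi> (a + b)" and p0: "\<phi> 0 = 0" and p1: "\<phi> 1 = 0"
begin

lemma Psi_pos: "Psi \<phi> l > 0"
  unfolding Psi_def by (rule prod_pos) auto

lemma Psi_U: "finite U \<Longrightarrow> set l \<subseteq> U \<Longrightarrow> Psi \<phi> l = (\<Prod>v\<in>U. exp (- \<phi> (count_list l v)))"
  unfolding Psi_def by (rule prod.mono_neutral_left) (auto simp: p0)

lemma Psi_map: "inj f \<Longrightarrow> Psi \<phi> (map f l) = Psi \<phi> l"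
  unfolding Psi_def by (simp add: prod.reindex inj_on_subset[of f UNIV] count_list_map_conv)

lemma Psi_rev: "Psi \<phi> (rev l) = Psi \<phi> l"
  unfolding Psi_def by simp

lemma Psi_append: "Psi \<phi> (xs @ ys) \<le> Psi \<phi> xs * Psi \<phi> ys"
proof -
  let ?U = "set xs \<union> set ys"
  have "Psi \<phi> (xs @ ys) = (\<Prod>v\<in>?U. exp (- \<phi> (count_list xs v + count_list ys v)))"
    by (subst Psi_U[of ?U]) auto
  also have "\<dots> \<le> (\<Prod>v\<in>?U. exp (- \<phi> (count_list xs v)) * exp (- \<phi> (count_list ys v)))"
  proof (rule prod_mono)
    fix v
    have "exp (- \<phi> (count_list xs v + count_list ys v)) \<le> exp (- \<phi> (count_list xs v) + - \<phi> (count_list ys v))"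
      using sup[of "count_list xs v" "count_list ys v"] by simp
    then show "0 \<le> exp (- \<phi> (count_list xs v + count_list ys v)) \<and> exp (- \<phi> (count_list xs v + count_list ys v)) \<le> exp (- \<phi> (count_list xs v)) * exp (- \<phi> (count_list ys v))"
      by (simp add: exp_add[symmetric])
  qed
  also have "\<dots> = Psi \<phi> xs * Psi \<phi> ys"
    by (simp add: prod.distrib Psi_U[of ?U])
  finally show ?thesis .
qed

lemma Psi_append_disj: "set xs \<inter> set ys = {} \<Longrightarrow> Psi \<phi> (xs @ ys) = Psi \<phi> xs * Psi \<phi> ys"
proof -
  assume dj: "set xs \<inter> set ys = {}"
  let ?U = "set xs \<union> set ys"
  have "Psi \<phi> (xs @ ys) = (\<Prod>v\<in>?U. exp (- \<phi> (count_list xs v + count_list ys v)))"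
    by (subst Psi_U[of ?U]) auto
  also have "\<dots> = (\<Prod>v\<in>?U. exp (- \<phi> (count_list xs v)) * exp (- \<phi> (count_list ys v)))"
  proof (rule prod.cong)
    fix v assume "v \<in> ?U"
    then show "exp (- \<phi> (count_list xs v + count_list ys v)) = exp (- \<phi> (count_list xs v)) * exp (- \<phi> (count_list ys v))"
    proof (cases "v \<in> set xs")
      case True
      then have "v \<notin> set ys" using dj by auto
      then show ?thesis by (simp add: p0)
    next
      case False
      then show ?thesis by (simp add: p0)
    qed
  qed simp
  also have "\<dots> = Psi \<phi> xs * Psi \<phi> ys"
    by (simp add: prod.distrib Psi_U[of ?U])
  finally show ?thesis .
qed

lemma Psi_Cons_new: "a \<notin> set l \<Longrightarrow> Psi \<phi> (a # l) = Psi \<phi> l"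
  using Psi_append_disj[of "[a]" l] by (simp add: Psi_def p1[unfolded One_nat_def])

end


definition refl0 :: "pt \<Rightarrow> pt" where "refl0 w = w(0 := - w 0)"

lemma refl0_diff: "refl0 (a - b) = refl0 a - refl0 b"
  by (auto simp: refl0_def fun_eq_iff)

lemma refl0_inv[simp]: "refl0 (refl0 a) = a"
  by (auto simp: refl0_def fun_eq_iff)

lemma inj_refl0: "inj refl0"
  by (metis injI refl0_inv)

lemma refl0_x[simp]: "refl0 w 0 = - w 0"
  by (simp add: refl0_def)

locale wsaw =
  fixes d :: nat and \<Omega> :: "pt set" and \<phi> :: "nat \<Rightarrow> real" and \<rho> :: "pt \<Rightarrow> real" and u :: pt
  assumes finO: "finite \<Omega>" and zd: "\<And>v. v\<in>\<Omega> \<Longrightarrow> in_Zd d v" and orig: "origin \<notin> \<Omega>"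
  and negO: "\<And>v. v\<in>\<Omega> \<Longrightarrow> - v \<in> \<Omega> \<and> \<rho> (- v) = \<rho> v"
  and reflO: "\<And>v. v\<in>\<Omega> \<Longrightarrow> refl0 v \<in> \<Omega> \<and> \<rho> (refl0 v) = \<rho> v"
  and sup: "\<And>a b. \<phi> a + \<phi> b \<le> \<phi> (a + b)" and p0: "\<phi> 0 = 0" and p1: "\<phi> 1 = 0"
  and rnn: "\<And>v. v\<in>\<Omega> \<Longrightarrow> \<rho> v \<ge> 0" and rsum: "(\<Sum>v\<in>\<Omega>. \<rho> v) = 1"
  and uO: "u \<in> \<Omega>" and upos: "\<rho> u > 0" and ux: "u 0 > 0"
begin

abbreviation sig where "sig l \<equiv> sigma \<phi> \<rho> l"

lemma prodr_nonneg: "set (steps l) \<subseteq> \<Omega> \<Longrightarrow> 0 \<le> prod_list (map \<rho> (steps l))"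
  by (rule prod_list_nonneg) (auto intro: rnn)

lemma sig_nonneg: "set (steps l) \<subseteq> \<Omega> \<Longrightarrow> 0 \<le> sig l"
  unfolding sigma_alt using Psi_pos[OF sup p0 p1, of l] prodr_nonneg[of l] by simp

lemma sig_map:
  assumes "inj f" "\<And>a b. f b - f a = L (b - a)" "\<And>w. w\<in>\<Omega> \<Longrightarrow> L w \<in> \<Omega> \<and> \<rho> (L w) = \<rho> w"
    "set (steps l) \<subseteq> \<Omega>"
  shows "sig (map f l) = sig l" "set (steps (map f l)) \<subseteq> \<Omega>"
proof -
  have st: "steps (map f l) = map L (steps l)" by (rule steps_map) (rule assms(2))
  have eq: "map (\<rho> \<circ> L) (steps l) = map \<rho> (steps l)"
    using assms(3,4) by (intro map_cong) auto
  then show "sig (map f l) = sig l"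
    unfolding sigma_alt Psi_map[OF sup p0 p1 assms(1)] st map_map eq by simp
  show "set (steps (map f l)) \<subseteq> \<Omega>" using st assms(3,4) by auto
qed

lemma sig_trans:
  assumes "set (steps l) \<subseteq> \<Omega>"
  shows "sig (map (\<lambda>v. v - c) l) = sig l" "set (steps (map (\<lambda>v. v - c) l)) \<subseteq> \<Omega>"
proof -
  have i: "inj (\<lambda>v::pt. v - c)" by (rule injI) simp
  show "sig (map (\<lambda>v. v - c) l) = sig l" "set (steps (map (\<lambda>v. v - c) l)) \<subseteq> \<Omega>"
    using sig_map[OF i, of id, OF _ _ assms] by auto
qed

lemma sig_trans_plus:
  assumes "set (steps l) \<subseteq> \<Omega>"
  shows "sig (map (\<lambda>v. v + c) l) = sig l" "set (steps (map (\<lambda>v. v + c) l)) \<subseteq> \<Omega>"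
  using sig_trans[OF assms, of "- c"] by auto

lemma sig_refl:
  assumes "set (steps l) \<subseteq> \<Omega>"
  shows "sig (map (\<lambda>v. refl0 (v - c)) l) = sig l" "set (steps (map (\<lambda>v. refl0 (v - c)) l)) \<subseteq> \<Omega>"
proof -
  have i: "inj (\<lambda>v::pt. refl0 (v - c))"
    by (rule injI) (metis refl0_inv diff_add_cancel)
  have d: "\<And>a b. refl0 (b - c) - refl0 (a - c) = refl0 (b - a)"
    by (simp add: refl0_diff[symmetric])
  show "sig (map (\<lambda>v. refl0 (v - c)) l) = sig l" "set (steps (map (\<lambda>v. refl0 (v - c)) l)) \<subseteq> \<Omega>"
    using sig_map[OF i d reflO assms] by auto
qed

lemma sig_rev:
  assumes "set (steps l) \<subseteq> \<Omega>"
  shows "sig (rev l) = sig l" "set (steps (rev l)) \<subseteq> \<Omega>"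
proof -
  have eq: "map (\<rho> \<circ> uminus) (steps l) = map \<rho> (steps l)"
    using assms negO by (intro map_cong) auto
  then have "prod_list (map \<rho> (steps (rev l))) = prod_list (map \<rho> (steps l))"
    unfolding steps_rev rev_map[symmetric] prod_list.rev map_map eq by simp
  then show "sig (rev l) = sig l"
    unfolding sigma_alt Psi_rev[OF sup p0 p1] by simp
  show "set (steps (rev l)) \<subseteq> \<Omega>" using assms negO by (auto simp: steps_rev)
qed

lemma Psi_hd_new: "q \<noteq> [] \<Longrightarrow> hd q \<notin> set (tl q) \<Longrightarrow> Psi \<phi> q = Psi \<phi> (tl q)"
  using Psi_Cons_new[OF sup p0 p1, of "hd q" "tl q"] by simp

lemma sig_join:
  assumes "p \<noteq> []" "q \<noteq> []" "last p = hd q" "hd q \<notin> set (tl q)"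
    "set (steps p) \<subseteq> \<Omega>" "set (steps q) \<subseteq> \<Omega>"
  shows "sig (p @ tl q) \<le> sig p * sig q" "set (steps (p @ tl q)) \<subseteq> \<Omega>"
    "set p \<inter> set (tl q) = {} \<Longrightarrow> sig (p @ tl q) = sig p * sig q"
proof -
  have st: "steps (p @ tl q) = steps p @ steps q" using steps_join assms by auto
  have P: "Psi \<phi> q = Psi \<phi> (tl q)" using Psi_hd_new assms by auto
  have nn: "0 \<le> prod_list (map \<rho> (steps p)) * prod_list (map \<rho> (steps q))"
    using prodr_nonneg assms by simp
  show "sig (p @ tl q) \<le> sig p * sig q"
    unfolding sigma_alt st P using mult_right_mono[OF Psi_append[OF sup p0 p1, of p "tl q"] nn]
    by (simp add: algebra_simps)
  show "set (steps (p @ tl q)) \<subseteq> \<Omega>" using st assms by auto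
  assume "set p \<inter> set (tl q) = {}"
  then show "sig (p @ tl q) = sig p * sig q"
    unfolding sigma_alt st P using Psi_append_disj[OF sup p0 p1, of p "tl q"] by (simp add: algebra_simps)
qed

lemma sig_Cons_new:
  assumes "a \<notin> set l" "l \<noteq> []"
  shows "sig (a # l) = \<rho> (hd l - a) * sig l"
  unfolding sigma_alt Psi_Cons_new[OF sup p0 p1 assms(1)] steps_Cons[OF assms(2)] by simp

lemma sig_snoc:
  assumes "xs \<noteq> []" "set (steps xs) \<subseteq> \<Omega>" "a - last xs \<in> \<Omega>"
  shows "sig (xs @ [a]) \<le> sig xs * \<rho> (a - last xs)"
proof -
  have "Psi \<phi> (xs @ [a]) \<le> Psi \<phi> xs" using Psi_append[OF sup p0 p1, of xs "[a]"]
    by (simp add: Psi_def p1[unfolded One_nat_def])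
  moreover have "0 \<le> prod_list (map \<rho> (steps xs)) * \<rho> (a - last xs)"
    using prodr_nonneg[OF assms(2)] rnn[OF assms(3)] by simp
  ultimately show ?thesis
    unfolding sigma_alt steps_snoc[OF assms(1)]
    using mult_right_mono by (fastforce simp: algebra_simps)
qed


lemma sum_inj_le:
  fixes F :: "'a \<Rightarrow> real"
  assumes "finite T" "inj_on f S" "f ` S \<subseteq> T" "\<And>y. y\<in>T \<Longrightarrow> 0 \<le> g y" "\<And>x. x\<in>S \<Longrightarrow> F x \<le> g (f x)"
  shows "sum F S \<le> sum g T"
proof -
  have fS: "finite S" using assms(1-3) finite_subset finite_imageD by metis
  have "sum F S \<le> sum (g \<circ> f) S" using assms(5) by (intro sum_mono) auto
  also have "\<dots> = sum g (f ` S)" by (simp add: sum.reindex[OF assms(2)])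
  also have "\<dots> \<le> sum g T" using assms by (intro sum_mono2) auto
  finally show ?thesis .
qed

abbreviation W where "W n \<equiv> walks \<Omega> n"

lemma W_snoc:
  assumes "\<gamma> \<in> W (Suc n)"
  shows "butlast \<gamma> \<in> W n" "last \<gamma> - last (butlast \<gamma>) \<in> \<Omega>" "\<gamma> = butlast \<gamma> @ [last \<gamma>]"
proof -
  have l: "length \<gamma> = Suc (Suc n)" "hd \<gamma> = origin" "set (steps \<gamma>) \<subseteq> \<Omega>" using assms walks_iff by auto
  have lb: "length (butlast \<gamma>) = Suc n" using l by simp
  have ne: "\<gamma> \<noteq> []" "butlast \<gamma> \<noteq> []" using l(1) lb by (auto simp del: length_butlast)
  show g: "\<gamma> = butlast \<gamma> @ [last \<gamma>]" using ne by simp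
  have st: "steps \<gamma> = steps (butlast \<gamma>) @ [last \<gamma> - last (butlast \<gamma>)]"
    using steps_snoc[OF ne(2), of "last \<gamma>"] g by simp
  have "hd (butlast \<gamma>) = hd \<gamma>" using ne by (metis g hd_append2)
  then show "butlast \<gamma> \<in> W n" using l st by (auto simp: walks_iff)
  show "last \<gamma> - last (butlast \<gamma>) \<in> \<Omega>" using l st by auto
qed

lemma W0: "W 0 = {[origin]}"
  by (auto simp: walks_iff length_Suc_conv)

lemma finite_W: "finite (W n)"
proof (induction n)
  case 0
  then show ?case by (simp add: W0)
next
  case (Suc n)
  have "W (Suc n) \<subseteq> (\<lambda>(g, w). g @ [last g + w]) ` (W n \<times> \<Omega>)"
  proof
    fix \<gamma> assume a: "\<gamma> \<in> W (Suc n)"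
    have "\<gamma> = butlast \<gamma> @ [last (butlast \<gamma>) + (last \<gamma> - last (butlast \<gamma>))]"
      using W_snoc(3)[OF a] by simp
    then show "\<gamma> \<in> (\<lambda>(g, w). g @ [last g + w]) ` (W n \<times> \<Omega>)"
      using W_snoc(1,2)[OF a] by (intro image_eqI[of _ _ "(butlast \<gamma>, last \<gamma> - last (butlast \<gamma>))"]) auto
  qed
  then show ?case using Suc finO by (meson finite_SigmaI finite_imageI finite_subset)
qed

lemma W_steps: "\<gamma> \<in> W n \<Longrightarrow> set (steps \<gamma>) \<subseteq> \<Omega>"
  by (simp add: walks_iff)

lemma Z_mono: "Zn \<Omega> \<phi> \<rho> (Suc n) \<le> Zn \<Omega> \<phi> \<rho> n"
proof -
  have "Zn \<Omega> \<phi> \<rho> (Suc n) \<le> (\<Sum>(g, w)\<in>W n \<times> \<Omega>. sig g * \<rho> w)"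
    unfolding Zn_def
  proof (rule sum_inj_le[where f = "\<lambda>\<gamma>. (butlast \<gamma>, last \<gamma> - last (butlast \<gamma>))"])
    show "finite (W n \<times> \<Omega>)" using finite_W finO by simp
    show "inj_on (\<lambda>\<gamma>. (butlast \<gamma>, last \<gamma> - last (butlast \<gamma>))) (W (Suc n))"
    proof (rule inj_onI)
      fix x y assume xw: "x \<in> W (Suc n)" and yw: "y \<in> W (Suc n)" and e: "(butlast x, last x - last (butlast x)) = (butlast y, last y - last (butlast y))"
      have hx: "x = butlast x @ [last x]" by (rule W_snoc(3)[OF xw])
      have hy: "y = butlast y @ [last y]" by (rule W_snoc(3)[OF yw])
      have ll: "last x = last y"
      proof -
        have "last x - last (butlast x) = last y - last (butlast y)" "butlast x = butlast y" using e by auto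
        then show ?thesis by (metis diff_add_cancel)
      qed
      have bl: "butlast x = butlast y" using e by auto
      have "x = butlast x @ [last x]" by (rule hx)
      also have "\<dots> = butlast y @ [last y]" using bl ll by simp
      also have "\<dots> = y" using hy by simp
      finally show "x = y" .
    qed
    show "(\<lambda>\<gamma>. (butlast \<gamma>, last \<gamma> - last (butlast \<gamma>))) ` W (Suc n) \<subseteq> W n \<times> \<Omega>"
      using W_snoc by auto
    show "\<And>y. y \<in> W n \<times> \<Omega> \<Longrightarrow> 0 \<le> (case y of (g, w) \<Rightarrow> sig g * \<rho> w)"
      using sig_nonneg W_steps rnn by auto
    fix \<gamma> assume a: "\<gamma> \<in> W (Suc n)"
    have ne: "butlast \<gamma> \<noteq> []"
    proof
      assume "butlast \<gamma> = []"
      then show False using W_snoc(1)[OF a] by (simp add: walks_iff)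
    qed
    have "sig \<gamma> = sig (butlast \<gamma> @ [last \<gamma>])" using W_snoc(3)[OF a] by simp
    also have "\<dots> \<le> sig (butlast \<gamma>) * \<rho> (last \<gamma> - last (butlast \<gamma>))"
      by (rule sig_snoc[OF ne W_steps[OF W_snoc(1)[OF a]] W_snoc(2)[OF a]])
    finally show "sig \<gamma> \<le> (case (butlast \<gamma>, last \<gamma> - last (butlast \<gamma>)) of (g, w) \<Rightarrow> sig g * \<rho> w)" by simp
  qed
  also have "\<dots> = Zn \<Omega> \<phi> \<rho> n * (\<Sum>w\<in>\<Omega>. \<rho> w)"
    unfolding Zn_def sum_product sum.cartesian_product by simp
  finally show ?thesis using rsum by simp
qed


lemma origin_zero: "origin = 0"
  by (simp add: origin_def zero_fun_def)

lemma W_len: "\<gamma> \<in> W n \<Longrightarrow> length \<gamma> = Suc n" by (simp add: walks_iff)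
lemma W_hd: "\<gamma> \<in> W n \<Longrightarrow> \<gamma> ! 0 = 0"
  by (cases \<gamma>) (auto simp: walks_iff origin_zero)

abbreviation B where "B n \<equiv> bridges \<Omega> n"

lemma B_iff: "\<gamma> \<in> B n \<longleftrightarrow> \<gamma> \<in> W n \<and> (\<forall>i\<in>{1..n}. 0 < (\<gamma> ! i) 0 \<and> (\<gamma> ! i) 0 \<le> (\<gamma> ! n) 0)"
  unfolding bridges_def xcoord_def by (auto simp: W_hd)

lemma B_nonneg: "\<gamma> \<in> B n \<Longrightarrow> i \<le> n \<Longrightarrow> 0 \<le> (\<gamma> ! i) 0"
proof (cases "i = 0")
  case False
  assume "\<gamma> \<in> B n" "i \<le> n"
  then have "0 < (\<gamma> ! i) 0" using False unfolding B_iff by auto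
  then show ?thesis by simp
qed (auto simp: B_iff W_hd)

lemma B_le: "\<gamma> \<in> B n \<Longrightarrow> i \<le> n \<Longrightarrow> (\<gamma> ! i) 0 \<le> (\<gamma> ! n) 0"
  by (cases "i = 0") (auto simp: B_iff W_hd B_nonneg)

definition cat :: "pt list \<Rightarrow> pt list \<Rightarrow> pt list" where
  "cat b1 b2 = b1 @ tl (map (\<lambda>v. v + last b1) b2)"

lemma cat_len: "b1 \<in> W m \<Longrightarrow> b2 \<in> W k \<Longrightarrow> length (cat b1 b2) = Suc (m + k)"
  by (simp add: cat_def W_len)

lemma cat_nth1: "b1 \<in> W m \<Longrightarrow> i \<le> m \<Longrightarrow> cat b1 b2 ! i = b1 ! i"
  by (simp add: cat_def nth_append W_len)

lemma cat_nth2: "b1 \<in> W m \<Longrightarrow> b2 \<in> W k \<Longrightarrow> m \<le> i \<Longrightarrow> i \<le> m + k \<Longrightarrow> cat b1 b2 ! i = b2 ! (i - m) + b1 ! m"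
proof -
  assume a: "b1 \<in> W m" "b2 \<in> W k" "m \<le> i" "i \<le> m + k"
  have lb1: "last b1 = b1 ! m" using W_len[OF a(1)] by (subst last_conv_nth) auto
  show ?thesis
  proof (cases "i = m")
    case True
    then show ?thesis using a by (simp add: cat_nth1 W_hd)
  next
    case False
    then have "cat b1 b2 ! i = tl (map (\<lambda>v. v + last b1) b2) ! (i - Suc m)"
      using a by (simp add: cat_def nth_append W_len)
    also have "\<dots> = b2 ! (i - m) + last b1" using a False W_len[OF a(2)]
      by (simp add: nth_tl Suc_diff_Suc)
    finally show ?thesis using lb1 by simp
  qed
qed

lemma cat_B:
  assumes "b1 \<in> B m" "b2 \<in> B k"
  shows "cat b1 b2 \<in> B (m + k)" "(cat b1 b2 ! (m + k)) 0 = (b1 ! m) 0 + (b2 ! k) 0"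
    "sig (cat b1 b2) = sig b1 * sig b2"
proof -
  have w1: "b1 \<in> W m" and w2: "b2 \<in> W k" using assms by (auto simp: B_iff)
  let ?q = "map (\<lambda>v. v + last b1) b2"
  have lb1: "last b1 = b1 ! m" using W_len[OF w1] by (subst last_conv_nth) auto
  have ne: "b1 \<noteq> []" "?q \<noteq> []" using W_len[OF w1] W_len[OF w2] by auto
  have hq: "last b1 = hd ?q" using w2 by (cases b2) (auto simp: walks_iff origin_zero)
  have sq: "set (steps ?q) \<subseteq> \<Omega>" "sig ?q = sig b2" using sig_trans_plus W_steps[OF w2] by auto
  have A0: "0 \<le> (b1 ! m) 0" using B_nonneg[OF assms(1)] by simp
  have s0: "0 \<le> (b2 ! k) 0" using B_nonneg[OF assms(2)] by simp
  have tlq: "v \<in> set (tl ?q) \<Longrightarrow> (b1 ! m) 0 < v 0" for v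
  proof -
    assume "v \<in> set (tl ?q)"
    then obtain j where j: "j < k" "v = tl ?q ! j" using W_len[OF w2] by (auto simp: in_set_conv_nth)
    then have "v = b2 ! Suc j + last b1" using W_len[OF w2] by (simp add: nth_tl)
    moreover have "0 < (b2 ! Suc j) 0" using assms(2) j by (auto simp: B_iff)
    ultimately show ?thesis using lb1 by simp
  qed
  have hdq: "hd ?q \<notin> set (tl ?q)" using tlq hq lb1 by fastforce
  have dj: "set b1 \<inter> set (tl ?q) = {}"
  proof -
    have "v \<in> set b1 \<Longrightarrow> v 0 \<le> (b1 ! m) 0" for v
      using B_le[OF assms(1)] W_len[OF w1] by (auto simp: in_set_conv_nth less_Suc_eq_le)
    then show ?thesis using tlq by force
  qed
  have j: "sig (cat b1 b2) \<le> sig b1 * sig ?q" "set (steps (cat b1 b2)) \<subseteq> \<Omega>"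
    "sig (cat b1 b2) = sig b1 * sig ?q"
    using sig_join[OF ne hq hdq W_steps[OF w1] sq(1)] dj unfolding cat_def by auto
  show "sig (cat b1 b2) = sig b1 * sig b2" using j sq by simp
  have hc: "hd (cat b1 b2) = origin" using w1 ne by (auto simp: cat_def walks_iff)
  have wc: "cat b1 b2 \<in> W (m + k)" using cat_len[OF w1 w2] hc j(2) by (simp add: walks_iff)
  show last: "(cat b1 b2 ! (m + k)) 0 = (b1 ! m) 0 + (b2 ! k) 0"
    using cat_nth2[OF w1 w2, of "m + k"] by simp
  show "cat b1 b2 \<in> B (m + k)"
    unfolding B_iff
  proof (rule conjI[OF wc], intro ballI)
    fix i assume i: "i \<in> {1..m + k}"
    show "0 < (cat b1 b2 ! i) 0 \<and> (cat b1 b2 ! i) 0 \<le> (cat b1 b2 ! (m + k)) 0"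
    proof (cases "i \<le> m")
      case True
      then have "0 < (b1 ! i) 0 \<and> (b1 ! i) 0 \<le> (b1 ! m) 0" using i assms(1) unfolding B_iff by auto
      then show ?thesis using s0 last cat_nth1[OF w1 True] by auto
    next
      case False
      then have e: "(cat b1 b2 ! i) 0 = (b2 ! (i - m)) 0 + (b1 ! m) 0" using cat_nth2[OF w1 w2, of i] i by simp
      have "i - m \<in> {1..k}" using i False by auto
      then have "0 < (b2 ! (i - m)) 0" "(b2 ! (i - m)) 0 \<le> (b2 ! k) 0" using assms(2) unfolding B_iff by auto
      then show ?thesis using e last A0 by simp
    qed
  qed
qed

lemma cat_inj:
  assumes "b1 \<in> W m" "b2 \<in> W k" "b1' \<in> W m" "b2' \<in> W k'" "cat b1 b2 = cat b1' b2'"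
  shows "b1 = b1' \<and> b2 = b2'"
proof -
  have e1: "b1 = b1'"
    using arg_cong[OF assms(5), of "take (Suc m)"] W_len assms(1,3) by (simp add: cat_def)
  then have "tl (map (\<lambda>v. v + last b1) b2) = tl (map (\<lambda>v. v + last b1) b2')"
    using assms(5) by (simp add: cat_def)
  then have "map (\<lambda>v. v + last b1) (tl b2) = map (\<lambda>v. v + last b1) (tl b2')" by (simp add: map_tl)
  then have "tl b2 = tl b2'" by (rule map_inj_on) (auto intro: inj_onI)
  moreover have "hd b2 = hd b2'" using assms(2,4) by (simp add: walks_iff)
  moreover have "b2 \<noteq> []" "b2' \<noteq> []" using W_len[OF assms(2)] W_len[OF assms(4)] by auto
  ultimately have "b2 = b2'" by (metis list.collapse)
  then show ?thesis using e1 by simp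
qed


definition bs where "bs n s = {\<gamma> \<in> B n. (\<gamma> ! n) 0 = s}"
definition b where "b n s = (\<Sum>\<gamma>\<in>bs n s. sig \<gamma>)"
abbreviation H where "H n \<equiv> Hn \<Omega> \<phi> \<rho> n"

lemma finite_B: "finite (B n)"
  by (rule finite_subset[OF _ finite_W[of n]]) (auto simp: bridges_def)

lemma finite_bs: "finite (bs n s)"
  using finite_B by (simp add: bs_def)

lemma B_steps: "\<gamma> \<in> B n \<Longrightarrow> set (steps \<gamma>) \<subseteq> \<Omega>"
  unfolding B_iff using W_steps by blast

lemma sigB: "\<gamma> \<in> B n \<Longrightarrow> 0 \<le> sig \<gamma>"
  using sig_nonneg B_steps by blast

lemma sigW: "\<gamma> \<in> W n \<Longrightarrow> 0 \<le> sig \<gamma>"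
  using sig_nonneg W_steps by blast

lemma b_nonneg: "0 \<le> b n s"
  unfolding b_def bs_def by (rule sum_nonneg) (auto simp: sigB)

lemma H_nonneg: "0 \<le> H n"
  unfolding Hn_def by (rule sum_nonneg) (auto simp: sigB)

lemma b_le_H: "b n s \<le> H n"
  unfolding b_def Hn_def bs_def
  by (rule sum_mono2[OF finite_B]) (auto simp: sigB)

lemma H_supermult: "H a * H c \<le> H (a + c)"
proof -
  have "H a * H c = (\<Sum>(x, y)\<in>B a \<times> B c. sig x * sig y)"
    unfolding Hn_def sum_product sum.cartesian_product by simp
  also have "\<dots> \<le> (\<Sum>\<gamma>\<in>B (a + c). sig \<gamma>)"
  proof (rule sum_inj_le[where f = "\<lambda>(x, y). cat x y"])
    show "finite (B (a + c))" by (rule finite_B)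
    show "inj_on (\<lambda>(x, y). cat x y) (B a \<times> B c)"
      by (rule inj_onI) (auto simp: B_iff dest: cat_inj)
    show "(\<lambda>(x, y). cat x y) ` (B a \<times> B c) \<subseteq> B (a + c)" using cat_B by auto
    show "\<And>y. y \<in> B (a + c) \<Longrightarrow> 0 \<le> sig y" by (auto simp: sigB)
    show "\<And>x. x \<in> B a \<times> B c \<Longrightarrow> (case x of (x, y) \<Rightarrow> sig x * sig y) \<le> sig (case x of (x, y) \<Rightarrow> cat x y)"
      using cat_B by auto
  qed
  finally show ?thesis unfolding Hn_def .
qed

lemma cat_x_after:
  assumes "x \<in> B m" "y \<in> B k" "m < i" "i \<le> m + k"
  shows "(x ! m) 0 < (cat x y ! i) 0"
proof -
  have w: "x \<in> W m" "y \<in> W k" using assms by (auto simp: B_iff)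
  have "(cat x y ! i) 0 = (y ! (i - m)) 0 + (x ! m) 0" using cat_nth2[OF w, of i] assms by simp
  moreover have "i - m \<in> {1..k}" using assms by auto
  then have "0 < (y ! (i - m)) 0" using assms(2) unfolding B_iff by auto
  ultimately show ?thesis by simp
qed

lemma b_conv:
  "(\<Sum>m\<in>{0..n}. b m A * b (n - m) s) \<le> b n (A + s)"
proof -
  let ?S = "Sigma {0..n} (\<lambda>m. bs m A \<times> bs (n - m) s)"
  have "(\<Sum>m\<in>{0..n}. b m A * b (n - m) s) = (\<Sum>m\<in>{0..n}. \<Sum>p\<in>bs m A \<times> bs (n - m) s. sig (fst p) * sig (snd p))"
    unfolding b_def sum_product sum.cartesian_product by (simp add: case_prod_beta)
  also have "\<dots> = (\<Sum>(m, p)\<in>?S. sig (fst p) * sig (snd p))"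
    by (rule sum.Sigma) (auto simp: finite_bs)
  also have "\<dots> \<le> (\<Sum>\<gamma>\<in>bs n (A + s). sig \<gamma>)"
  proof (rule sum_inj_le[where f = "\<lambda>(m, p). cat (fst p) (snd p)"])
    show "finite (bs n (A + s))" by (rule finite_bs)
    show "inj_on (\<lambda>(m, p). cat (fst p) (snd p)) ?S"
    proof (rule inj_onI, clarsimp)
      fix m x y m' x' y'
      assume a: "m \<le> n" "x \<in> bs m A" "y \<in> bs (n - m) s" "m' \<le> n" "x' \<in> bs m' A" "y' \<in> bs (n - m') s"
        and e: "cat x y = cat x' y'"
      have B: "x \<in> B m" "y \<in> B (n - m)" "x' \<in> B m'" "y' \<in> B (n - m')" and xm: "(x ! m) 0 = A" "(x' ! m') 0 = A"
        using a by (auto simp: bs_def)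
      have w: "x \<in> W m" "y \<in> W (n - m)" "x' \<in> W m'" "y' \<in> W (n - m')" using B by (auto simp: B_iff)
      have "m = m'"
      proof (rule ccontr)
        assume "m \<noteq> m'"
        then consider "m < m'" | "m' < m" by linarith
        then show False
        proof cases
          case 1
          have "A < (cat x y ! m') 0" using cat_x_after[OF B(1,2) 1] a xm by simp
          moreover have "(cat x' y' ! m') 0 = A" using cat_nth1[OF w(3), of m'] xm by simp
          ultimately show False using e by simp
        next
          case 2
          have "A < (cat x' y' ! m) 0" using cat_x_after[OF B(3,4) 2] a xm by simp
          moreover have "(cat x y ! m) 0 = A" using cat_nth1[OF w(1), of m] xm by simp
          ultimately show False using e by simp
        qed
      qed
      then show "m = m' \<and> x = x' \<and> y = y'" using cat_inj[OF w(1,2)] w(3,4) e by auto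
    qed
    show "(\<lambda>(m, p). cat (fst p) (snd p)) ` ?S \<subseteq> bs n (A + s)"
    proof clarsimp
      fix m x y assume a: "m \<le> n" "x \<in> bs m A" "y \<in> bs (n - m) s"
      then have "x \<in> B m" "y \<in> B (n - m)" "(x ! m) 0 = A" "(y ! (n - m)) 0 = s" by (auto simp: bs_def)
      then show "cat x y \<in> bs n (A + s)" using cat_B[of x m y "n - m"] a(1) by (auto simp: bs_def)
    qed
    show "\<And>y. y \<in> bs n (A + s) \<Longrightarrow> 0 \<le> sig y" by (auto simp: bs_def sigB)
    show "\<And>x. x \<in> ?S \<Longrightarrow> (case x of (m, p) \<Rightarrow> sig (fst p) * sig (snd p)) \<le> sig (case x of (m, p) \<Rightarrow> cat (fst p) (snd p))"
      using cat_B by (auto simp: bs_def)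
  qed
  finally show ?thesis unfolding b_def .
qed


definition HS where "HS n = {\<gamma> \<in> W n. \<forall>i\<in>{1..n}. 0 < (\<gamma> ! i) 0}"
definition HT where "HT n A = {\<gamma> \<in> HS n. \<forall>i\<le>n. (\<gamma> ! i) 0 \<le> A}"
definition HE where "HE n A = {\<gamma> \<in> HS n. (\<forall>i\<le>n. (\<gamma> ! i) 0 \<le> A) \<and> (\<exists>i\<le>n. (\<gamma> ! i) 0 = A)}"
definition T where "T n A = (\<Sum>\<gamma>\<in>HT n A. sig \<gamma>)"

lemma finite_HS: "finite (HS n)"
  by (rule finite_subset[OF _ finite_W[of n]]) (auto simp: HS_def)
lemma finite_HT: "finite (HT n A)"
  by (rule finite_subset[OF _ finite_HS[of n]]) (auto simp: HT_def)
lemma finite_HE: "finite (HE n A)"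
  by (rule finite_subset[OF _ finite_HS[of n]]) (auto simp: HE_def)

lemma sigHS: "\<gamma> \<in> HS n \<Longrightarrow> 0 \<le> sig \<gamma>"
  by (auto simp: HS_def sigW)

lemma T_nonneg: "0 \<le> T n A"
  unfolding T_def by (rule sum_nonneg) (auto simp: HT_def sigHS)

lemma split_take_drop:
  assumes "\<gamma> \<in> W n" "m \<le> n"
  shows "\<gamma> = take (Suc m) \<gamma> @ tl (drop m \<gamma>)" "last (take (Suc m) \<gamma>) = hd (drop m \<gamma>)"
    "take (Suc m) \<gamma> \<noteq> []" "drop m \<gamma> \<noteq> []" "hd (drop m \<gamma>) = \<gamma> ! m"
    "set (steps (take (Suc m) \<gamma>)) \<subseteq> \<Omega>" "set (steps (drop m \<gamma>)) \<subseteq> \<Omega>"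
    "take (Suc m) \<gamma> \<in> W m" "length (drop m \<gamma>) = Suc (n - m)"
proof -
  have l: "length \<gamma> = Suc n" using W_len[OF assms(1)] .
  have tl: "tl (drop m \<gamma>) = drop (Suc m) \<gamma>" by (simp add: drop_Suc tl_drop)
  show g: "\<gamma> = take (Suc m) \<gamma> @ tl (drop m \<gamma>)" unfolding tl by simp
  show hd: "hd (drop m \<gamma>) = \<gamma> ! m" using l assms(2) by (simp add: hd_drop_conv_nth)
  have "last (take (Suc m) \<gamma>) = take (Suc m) \<gamma> ! m"
    using l assms(2) by (subst last_conv_nth) (auto simp: min_def)
  then show ls: "last (take (Suc m) \<gamma>) = hd (drop m \<gamma>)" using hd by simp
  show ne: "take (Suc m) \<gamma> \<noteq> []" "drop m \<gamma> \<noteq> []" using l assms(2) by auto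
  have "steps \<gamma> = steps (take (Suc m) \<gamma>) @ steps (drop m \<gamma>)"
    using steps_join[OF ne ls] g by simp
  then show "set (steps (take (Suc m) \<gamma>)) \<subseteq> \<Omega>" "set (steps (drop m \<gamma>)) \<subseteq> \<Omega>"
    using W_steps[OF assms(1)] by auto
  then show "take (Suc m) \<gamma> \<in> W m" using l assms ne(1)
    by (auto simp: walks_iff min_def)
  show "length (drop m \<gamma>) = Suc (n - m)" using l assms(2) by simp
qed


lemma recon:
  assumes "\<gamma> \<in> W n" "m \<le> n"
  shows "\<gamma> = take (Suc m) \<gamma> @ tl (map (\<lambda>w. refl0 w + last (take (Suc m) \<gamma>)) (map (\<lambda>v. refl0 (v - \<gamma> ! m)) (drop m \<gamma>)))"
proof -
  have "last (take (Suc m) \<gamma>) = \<gamma> ! m" using split_take_drop[OF assms] by simp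
  moreover have "map (\<lambda>w. refl0 w + \<gamma> ! m) (map (\<lambda>v. refl0 (v - \<gamma> ! m)) (drop m \<gamma>)) = drop m \<gamma>"
    by (simp add: comp_def)
  ultimately show ?thesis using split_take_drop(1)[OF assms] by simp
qed

lemma decomp_one:
  assumes g: "\<gamma> \<in> HS n" and m: "m \<le> n" and gm: "(\<gamma> ! m) 0 = A1" and le: "\<forall>i\<le>n. (\<gamma> ! i) 0 \<le> A1"
    and lt: "\<forall>i. m < i \<and> i \<le> n \<longrightarrow> (\<gamma> ! i) 0 < A1" and A1: "0 < A1"
  defines "q \<equiv> map (\<lambda>v. refl0 (v - \<gamma> ! m)) (drop m \<gamma>)"
  shows "take (Suc m) \<gamma> \<in> bs m A1" "q \<in> HT (n - m) (A1 - 1)" "sig \<gamma> \<le> sig (take (Suc m) \<gamma>) * sig q"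
proof -
  have w: "\<gamma> \<in> W n" and hs: "\<forall>i\<in>{1..n}. 0 < (\<gamma> ! i) 0" using g by (auto simp: HS_def)
  note sp = split_take_drop[OF w m]
  have l: "length \<gamma> = Suc n" using W_len[OF w] .
  show "take (Suc m) \<gamma> \<in> bs m A1"
    unfolding bs_def B_iff using sp(8) hs gm le m by (auto simp: nth_take)
  have qn: "j \<le> n - m \<Longrightarrow> q ! j = refl0 (\<gamma> ! (m + j) - \<gamma> ! m)" for j
  proof -
    assume j: "j \<le> n - m"
    have "m \<le> length \<gamma>" using l m by simp
    then have "drop m \<gamma> ! j = \<gamma> ! (m + j)" by (rule nth_drop)
    moreover have "j < length (drop m \<gamma>)" using l m j by simp
    ultimately show ?thesis by (simp add: q_def)
  qed
  have lq: "length q = Suc (n - m)" using sp(9) by (simp add: q_def)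
  have sq: "set (steps q) \<subseteq> \<Omega>" "sig q = sig (drop m \<gamma>)" using sig_refl[OF sp(7)] by (auto simp: q_def)
  have hq: "hd q = origin" using sp(4,5) by (simp add: q_def hd_map origin_zero refl0_def zero_fun_def fun_eq_iff)
  show "q \<in> HT (n - m) (A1 - 1)"
    unfolding HT_def HS_def
  proof (intro CollectI conjI allI impI ballI)
    show "q \<in> W (n - m)" using lq hq sq by (simp add: walks_iff)
    fix j assume "j \<in> {1..n - m}"
    then show "0 < (q ! j) 0" using qn[of j] lt gm by auto
  next
    fix j assume j: "j \<le> n - m"
    show "(q ! j) 0 \<le> A1 - 1"
    proof (cases "j = 0")
      case True
      then show ?thesis using qn[of 0] A1 by simp
    next
      case False
      then have "0 < (\<gamma> ! (m + j)) 0" using hs j by auto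
      then show ?thesis using qn[OF j] gm by simp
    qed
  qed
  have "hd (drop m \<gamma>) \<notin> set (tl (drop m \<gamma>))"
  proof
    assume "hd (drop m \<gamma>) \<in> set (tl (drop m \<gamma>))"
    moreover have "length (tl (drop m \<gamma>)) = n - m" using l m by simp
    ultimately obtain j where "j < n - m" "tl (drop m \<gamma>) ! j = \<gamma> ! m" using sp(5)
      by (metis in_set_conv_nth)
    then have "\<gamma> ! (Suc m + j) = \<gamma> ! m" using l m by (simp add: nth_tl)
    moreover have "(\<gamma> ! (Suc m + j)) 0 < A1" using lt \<open>j < n - m\<close> by auto
    ultimately show False using gm by simp
  qed
  then have "sig (take (Suc m) \<gamma> @ tl (drop m \<gamma>)) \<le> sig (take (Suc m) \<gamma>) * sig (drop m \<gamma>)"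
    using sig_join(1)[OF sp(3,4,2) _ sp(6,7)] by simp
  then show "sig \<gamma> \<le> sig (take (Suc m) \<gamma>) * sig q" using sp(1) sq by simp
qed


lemma HE_bound:
  assumes A1: "0 < A1"
  shows "(\<Sum>\<gamma>\<in>HE n A1. sig \<gamma>) \<le> (\<Sum>m\<in>{0..n}. b m A1 * T (n - m) (A1 - 1))"
proof -
  define mm where "mm \<gamma> = Max {i. i \<le> n \<and> (\<gamma> ! i) 0 = A1}" for \<gamma> :: "pt list"
  define qq where "qq \<gamma> = map (\<lambda>v. refl0 (v - \<gamma> ! mm \<gamma>)) (drop (mm \<gamma>) \<gamma>)" for \<gamma>
  let ?S = "Sigma {0..n} (\<lambda>m. bs m A1 \<times> HT (n - m) (A1 - 1))"
  have P: "mm \<gamma> \<le> n \<and> (\<gamma> ! mm \<gamma>) 0 = A1 \<and> (\<forall>i. mm \<gamma> < i \<and> i \<le> n \<longrightarrow> (\<gamma> ! i) 0 < A1)"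
    if g: "\<gamma> \<in> HE n A1" for \<gamma>
  proof -
    let ?I = "{i. i \<le> n \<and> (\<gamma> ! i) 0 = A1}"
    have fin: "finite ?I" by simp
    have ne: "?I \<noteq> {}" using g by (auto simp: HE_def)
    have "mm \<gamma> \<in> ?I" unfolding mm_def using Max_in[OF fin ne] .
    moreover have "\<forall>i. mm \<gamma> < i \<and> i \<le> n \<longrightarrow> (\<gamma> ! i) 0 < A1"
    proof (intro allI impI)
      fix i assume i: "mm \<gamma> < i \<and> i \<le> n"
      have "(\<gamma> ! i) 0 \<le> A1" using g i by (auto simp: HE_def)
      moreover have "(\<gamma> ! i) 0 \<noteq> A1"
      proof
        assume "(\<gamma> ! i) 0 = A1"
        then have "i \<le> mm \<gamma>" unfolding mm_def using i by (intro Max_ge) auto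
        then show False using i by simp
      qed
      ultimately show "(\<gamma> ! i) 0 < A1" by simp
    qed
    ultimately show ?thesis by simp
  qed
  have D: "take (Suc (mm \<gamma>)) \<gamma> \<in> bs (mm \<gamma>) A1 \<and> qq \<gamma> \<in> HT (n - mm \<gamma>) (A1 - 1)
      \<and> sig \<gamma> \<le> sig (take (Suc (mm \<gamma>)) \<gamma>) * sig (qq \<gamma>)" if g: "\<gamma> \<in> HE n A1" for \<gamma>
  proof -
    have hs: "\<gamma> \<in> HS n" "\<forall>i\<le>n. (\<gamma> ! i) 0 \<le> A1" using g by (auto simp: HE_def)
    show ?thesis using decomp_one[OF hs(1) _ _ hs(2) _ A1, of "mm \<gamma>"] P[OF g] unfolding qq_def by blast
  qed
  have "(\<Sum>\<gamma>\<in>HE n A1. sig \<gamma>) \<le> (\<Sum>(m, p)\<in>?S. sig (fst p) * sig (snd p))"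
  proof (rule sum_inj_le[where f = "\<lambda>\<gamma>. (mm \<gamma>, (take (Suc (mm \<gamma>)) \<gamma>, qq \<gamma>))"])
    show "finite ?S" by (auto simp: finite_bs finite_HT)
    show "inj_on (\<lambda>\<gamma>. (mm \<gamma>, take (Suc (mm \<gamma>)) \<gamma>, qq \<gamma>)) (HE n A1)"
    proof (rule inj_onI)
      fix x y assume x: "x \<in> HE n A1" and y: "y \<in> HE n A1"
        and e: "(mm x, take (Suc (mm x)) x, qq x) = (mm y, take (Suc (mm y)) y, qq y)"
      have wx: "x \<in> W n" and wy: "y \<in> W n" using x y by (auto simp: HE_def HS_def)
      have "x = take (Suc (mm x)) x @ tl (map (\<lambda>w. refl0 w + last (take (Suc (mm x)) x)) (qq x))"
        using recon[OF wx, of "mm x"] P[OF x] unfolding qq_def by simp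
      also have "\<dots> = take (Suc (mm y)) y @ tl (map (\<lambda>w. refl0 w + last (take (Suc (mm y)) y)) (qq y))"
      proof -
        have "take (Suc (mm x)) x = take (Suc (mm y)) y" "qq x = qq y" using e by auto
        then show ?thesis by simp
      qed
      also have "\<dots> = y"
        using recon[OF wy, of "mm y"] P[OF y] unfolding qq_def by simp
      finally show "x = y" .
    qed
    show "(\<lambda>\<gamma>. (mm \<gamma>, take (Suc (mm \<gamma>)) \<gamma>, qq \<gamma>)) ` HE n A1 \<subseteq> ?S"
      using D P by auto
    show "\<And>y. y \<in> ?S \<Longrightarrow> 0 \<le> (case y of (m, p) \<Rightarrow> sig (fst p) * sig (snd p))"
      by (auto simp: bs_def HT_def sigB sigHS)
    show "\<And>x. x \<in> HE n A1 \<Longrightarrow> sig x \<le> (case (mm x, take (Suc (mm x)) x, qq x) of (m, p) \<Rightarrow> sig (fst p) * sig (snd p))"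
      using D by simp
  qed
  also have "\<dots> = (\<Sum>m\<in>{0..n}. \<Sum>p\<in>bs m A1 \<times> HT (n - m) (A1 - 1). sig (fst p) * sig (snd p))"
    by (rule sum.Sigma[symmetric]) (auto simp: finite_bs finite_HT)
  also have "\<dots> = (\<Sum>m\<in>{0..n}. b m A1 * T (n - m) (A1 - 1))"
    unfolding b_def T_def sum_product sum.cartesian_product by (simp add: case_prod_beta)
  finally show ?thesis .
qed


lemma sum_Pow_insert:
  fixes F :: "'a set \<Rightarrow> real"
  assumes "finite X" "a \<notin> X"
  shows "sum F (Pow (insert a X)) = sum F (Pow X) + (\<Sum>S\<in>Pow X. F (insert a S))"
proof -
  have "sum F (Pow (insert a X)) = sum F (Pow X) + sum F (insert a ` Pow X)"
    unfolding Pow_insert by (rule sum.union_disjoint) (use assms in auto)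
  also have "sum F (insert a ` Pow X) = (\<Sum>S\<in>Pow X. F (insert a S))"
  proof (rule sum.reindex[unfolded comp_def])
    show "inj_on (insert a) (Pow X)"
    proof (rule inj_onI)
      fix x y assume "x \<in> Pow X" "y \<in> Pow X" "insert a x = insert a y"
      moreover have "a \<notin> x" "a \<notin> y" using assms calculation by auto
      ultimately have "insert a x - {a} = insert a y - {a}" "x = insert a x - {a}" "y = insert a y - {a}" by auto
      then show "x = y" by simp
    qed
  qed
  finally show ?thesis .
qed

lemma HT0: "HT n 0 \<subseteq> bs n 0"
proof
  fix \<gamma> assume g: "\<gamma> \<in> HT n 0"
  have n: "n = 0"
  proof (rule ccontr)
    assume "n \<noteq> 0"
    then have "0 < (\<gamma> ! 1) 0" "(\<gamma> ! 1) 0 \<le> 0" using g by (auto simp: HT_def HS_def)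
    then show False by simp
  qed
  have w: "\<gamma> \<in> W 0" using g n by (auto simp: HT_def HS_def)
  then show "\<gamma> \<in> bs n 0" using n by (simp add: bs_def B_iff W_hd)
qed

lemma T_bound: "T n (int A) \<le> (\<Sum>S\<in>Pow {1..A}. b n (int (\<Sum>S)))"
proof (induction A arbitrary: n)
  case 0
  have "T n 0 \<le> b n 0" unfolding T_def b_def
    by (rule sum_mono2[OF finite_bs HT0]) (auto simp: bs_def sigB)
  then show ?case by simp
next
  case (Suc A)
  let ?A1 = "int (Suc A)"
  have U: "HT n ?A1 = HT n (int A) \<union> HE n ?A1"
  proof
    show "HT n ?A1 \<subseteq> HT n (int A) \<union> HE n ?A1"
    proof
      fix \<gamma> assume g: "\<gamma> \<in> HT n ?A1"
      show "\<gamma> \<in> HT n (int A) \<union> HE n ?A1"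
      proof (cases "\<forall>i\<le>n. (\<gamma> ! i) 0 \<le> int A")
        case True
        then show ?thesis using g by (auto simp: HT_def)
      next
        case False
        then obtain i where i: "i \<le> n" "(\<gamma> ! i) 0 > int A" by auto
        moreover have "(\<gamma> ! i) 0 \<le> ?A1" using g i by (auto simp: HT_def)
        ultimately have "(\<gamma> ! i) 0 = ?A1" by simp
        then show ?thesis using g i by (auto simp: HT_def HE_def)
      qed
    qed
    show "HT n (int A) \<union> HE n ?A1 \<subseteq> HT n ?A1"
      by (auto simp: HT_def HE_def)
  qed
  have dj: "HT n (int A) \<inter> HE n ?A1 = {}"
  proof (rule ccontr)
    assume "HT n (int A) \<inter> HE n ?A1 \<noteq> {}"
    then obtain \<gamma> i where "\<gamma> \<in> HT n (int A)" "i \<le> n" "(\<gamma> ! i) 0 = ?A1" by (auto simp: HE_def)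
    then have "?A1 \<le> int A" by (auto simp: HT_def)
    then show False by simp
  qed
  have "T n ?A1 = T n (int A) + (\<Sum>\<gamma>\<in>HE n ?A1. sig \<gamma>)"
    unfolding T_def U by (rule sum.union_disjoint[OF finite_HT finite_HE dj])
  also have "\<dots> \<le> (\<Sum>S\<in>Pow {1..A}. b n (int (\<Sum>S))) + (\<Sum>m\<in>{0..n}. b m ?A1 * T (n - m) (?A1 - 1))"
    using Suc.IH[of n] HE_bound[of ?A1 n] by simp
  also have "(\<Sum>m\<in>{0..n}. b m ?A1 * T (n - m) (?A1 - 1))
      \<le> (\<Sum>m\<in>{0..n}. b m ?A1 * (\<Sum>S\<in>Pow {1..A}. b (n - m) (int (\<Sum>S))))"
    by (rule sum_mono) (use Suc.IH b_nonneg in \<open>auto intro: mult_left_mono\<close>)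
  also have "\<dots> = (\<Sum>S\<in>Pow {1..A}. \<Sum>m\<in>{0..n}. b m ?A1 * b (n - m) (int (\<Sum>S)))"
    by (simp add: sum_distrib_left sum.swap[of _ "{0..n}"])
  also have "\<dots> \<le> (\<Sum>S\<in>Pow {1..A}. b n (?A1 + int (\<Sum>S)))"
    by (rule sum_mono) (rule b_conv)
  also have "\<dots> = (\<Sum>S\<in>Pow {1..A}. b n (int (\<Sum>(insert (Suc A) S))))"
  proof (rule sum.cong)
    fix S assume "S \<in> Pow {1..A}"
    then have "finite S" "Suc A \<notin> S" by (auto intro: finite_subset)
    then show "b n (?A1 + int (\<Sum>S)) = b n (int (\<Sum>(insert (Suc A) S)))" by (simp add: add.assoc)
  qed simp
  finally have "T n ?A1 \<le> (\<Sum>S\<in>Pow {1..A}. b n (int (\<Sum>S))) + (\<Sum>S\<in>Pow {1..A}. b n (int (\<Sum>(insert (Suc A) S))))"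
    by simp
  also have "\<dots> = (\<Sum>S\<in>Pow {1..Suc A}. b n (int (\<Sum>S)))"
    using sum_Pow_insert[of "{1..A}" "Suc A" "\<lambda>S. b n (int (\<Sum>S))"] by (simp add: atLeastAtMostSuc_conv)
  finally show ?case .
qed


definition R :: int where "R = Max ((\<lambda>v. v 0) ` \<Omega>)"

lemma R_ge: "v \<in> \<Omega> \<Longrightarrow> v 0 \<le> R"
  unfolding R_def using finO by (intro Max_ge) auto

lemma R_pos: "0 < R"
  using R_ge[OF uO] ux by simp

lemma W_x_le: "\<gamma> \<in> W n \<Longrightarrow> i \<le> n \<Longrightarrow> (\<gamma> ! i) 0 \<le> R * int i"
proof (induction i)
  case 0
  then show ?case by (simp add: W_hd)
next
  case (Suc i)
  have l: "length \<gamma> = Suc n" using W_len[OF Suc.prems(1)] .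
  have "steps \<gamma> ! i \<in> \<Omega>" using W_steps[OF Suc.prems(1)] l Suc.prems(2)
    by (metis diff_Suc_1 length_steps less_eq_Suc_le nth_mem subsetD)
  then have "\<gamma> ! Suc i - \<gamma> ! i \<in> \<Omega>" using nth_steps[of i \<gamma>] l Suc.prems(2) by simp
  then have "(\<gamma> ! Suc i - \<gamma> ! i) 0 \<le> R" by (rule R_ge)
  then show ?case using Suc by (simp add: algebra_simps)
qed

definition MM where "MM n = nat R * n"

lemma HS_HT: "HS n = HT n (int (MM n))"
proof -
  have "\<gamma> \<in> HS n \<Longrightarrow> i \<le> n \<Longrightarrow> (\<gamma> ! i) 0 \<le> int (MM n)" for \<gamma> i
  proof -
    assume "\<gamma> \<in> HS n" "i \<le> n"
    then have "(\<gamma> ! i) 0 \<le> R * int i" using W_x_le by (auto simp: HS_def)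
    also have "\<dots> \<le> R * int n" using R_pos \<open>i \<le> n\<close> by simp
    also have "\<dots> = int (MM n)" using R_pos by (simp add: MM_def)
    finally show ?thesis .
  qed
  then show ?thesis by (auto simp: HT_def)
qed

lemma b_zero: "int (MM n) < s \<Longrightarrow> b n s = 0"
proof -
  assume s: "int (MM n) < s"
  have "bs n s = {}"
  proof (rule ccontr)
    assume "bs n s \<noteq> {}"
    then obtain \<gamma> where "\<gamma> \<in> B n" "(\<gamma> ! n) 0 = s" by (auto simp: bs_def)
    then have "s \<le> R * int n" using W_x_le[of \<gamma> n n] by (auto simp: B_iff)
    also have "\<dots> = int (MM n)" using R_pos by (simp add: MM_def)
    finally show False using s by simp
  qed
  then show ?thesis by (simp add: b_def)
qed

lemma HS_bound_x:
  assumes x: "0 < x" "x \<le> 1"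
  shows "(\<Sum>\<gamma>\<in>HS n. sig \<gamma>) \<le> H n * ((\<Prod>k\<in>{1..MM n}. 1 + x ^ k) / x ^ MM n)"
proof -
  let ?M = "MM n"
  have "(\<Sum>\<gamma>\<in>HS n. sig \<gamma>) = T n (int ?M)" unfolding T_def HS_HT ..
  also have "\<dots> \<le> (\<Sum>S\<in>Pow {1..?M}. b n (int (\<Sum>S)))" by (rule T_bound)
  also have "\<dots> \<le> (\<Sum>S\<in>Pow {1..?M}. H n * x ^ (\<Sum>S) / x ^ ?M)"
  proof (rule sum_mono)
    fix S assume "S \<in> Pow {1..?M}"
    show "b n (int (\<Sum>S)) \<le> H n * x ^ (\<Sum>S) / x ^ ?M"
    proof (cases "\<Sum>S \<le> ?M")
      case True
      have "x ^ ?M \<le> x ^ (\<Sum>S)" using x True by (intro power_decreasing) auto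
      then have "1 \<le> x ^ (\<Sum>S) / x ^ ?M" using x by simp
      then have "H n \<le> H n * (x ^ (\<Sum>S) / x ^ ?M)" using H_nonneg[of n]
        by (metis mult_left_mono mult.right_neutral)
      then show ?thesis using b_le_H[of n "int (\<Sum>S)"] by simp
    next
      case False
      then have "int (MM n) < int (\<Sum>S)" by linarith
      then have "b n (int (\<Sum>S)) = 0" by (rule b_zero)
      then show ?thesis using x H_nonneg[of n] by simp
    qed
  qed
  also have "\<dots> = H n / x ^ ?M * (\<Sum>S\<in>Pow {1..?M}. x ^ (\<Sum>S))"
    by (simp add: sum_distrib_left)
  also have "(\<Sum>S\<in>Pow {1..?M}. x ^ (\<Sum>S)) = (\<Prod>k\<in>{1..?M}. 1 + x ^ k)"
  proof -
    have "(\<Prod>k\<in>{1..?M}. x ^ k + 1) = (\<Sum>X\<in>Pow {1..?M}. (\<Prod>k\<in>X. x ^ k) * (\<Prod>k\<in>{1..?M} - X. 1))"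
      by (rule prod_add) simp
    also have "\<dots> = (\<Sum>S\<in>Pow {1..?M}. x ^ (\<Sum>S))"
      by (simp add: power_sum)
    finally show ?thesis by (simp add: add.commute)
  qed
  finally show ?thesis by simp
qed

lemma HS_bound: "(\<Sum>\<gamma>\<in>HS n. sig \<gamma>) \<le> exp (3 * sqrt (real (nat R)) * sqrt (real n)) * H n"
proof (cases "MM n = 0")
  case True
  have "(\<Sum>\<gamma>\<in>HS n. sig \<gamma>) \<le> H n * ((\<Prod>k\<in>{1..MM n}. 1 + 1 ^ k) / 1 ^ MM n)"
    using HS_bound_x[of 1 n] by simp
  also have "\<dots> = H n" using True by simp
  also have "\<dots> \<le> exp (3 * sqrt (real (nat R)) * sqrt (real n)) * H n"
    using H_nonneg[of n] by (simp add: mult_le_cancel_right1)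
  finally show ?thesis .
next
  case False
  then obtain x where x: "0 < x" "x \<le> 1" "(\<Prod>k\<in>{1..MM n}. 1 + x ^ k) / x ^ MM n \<le> exp (3 * sqrt (MM n))"
    using gen_bound[of "MM n"] by auto
  have "(\<Sum>\<gamma>\<in>HS n. sig \<gamma>) \<le> H n * ((\<Prod>k\<in>{1..MM n}. 1 + x ^ k) / x ^ MM n)"
    using HS_bound_x[OF x(1,2)] .
  also have "\<dots> \<le> H n * exp (3 * sqrt (MM n))"
    using x(3) H_nonneg[of n] by (rule mult_left_mono)
  also have "sqrt (MM n) = sqrt (real (nat R)) * sqrt (real n)"
    by (simp add: MM_def real_sqrt_mult)
  finally show ?thesis by (simp add: ac_simps)
qed


lemma decomp_two:
  assumes w: "\<gamma> \<in> W n" and m: "m \<le> n" and mn: "\<forall>j\<le>n. (\<gamma> ! m) 0 \<le> (\<gamma> ! j) 0"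
    and lt: "\<forall>j. m < j \<and> j \<le> n \<longrightarrow> (\<gamma> ! m) 0 < (\<gamma> ! j) 0"
  defines "w1 \<equiv> map (\<lambda>v. v - (\<gamma> ! m - u)) ((\<gamma> ! m - u) # rev (take (Suc m) \<gamma>))"
    and "q \<equiv> map (\<lambda>v. v - \<gamma> ! m) (drop m \<gamma>)"
  shows "w1 \<in> HS (Suc m)" "q \<in> HS (n - m)" "\<rho> u * sig \<gamma> \<le> sig w1 * sig q"
    "\<gamma> = rev (map (\<lambda>v. v - last w1) (tl w1)) @ tl (map (\<lambda>v. v + last (rev (map (\<lambda>v. v - last w1) (tl w1)))) q)"
proof -
  note sp = split_take_drop[OF w m]
  have l: "length \<gamma> = Suc n" using W_len[OF w] .
  let ?p = "take (Suc m) \<gamma>"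
  let ?r = "drop m \<gamma>"
  let ?c = "\<gamma> ! m - u"
  have lp: "length ?p = Suc m" using l m by simp
  have pn: "j \<le> m \<Longrightarrow> ?p ! j = \<gamma> ! j" for j by simp
  have hp: "hd (rev ?p) = \<gamma> ! m" using sp(2,5) sp(3) by (simp add: hd_rev)
  have lrp: "last (rev ?p) = 0" using sp(3) W_hd[OF w] by (simp add: last_rev hd_conv_nth)
  have rpn: "j \<le> m \<Longrightarrow> rev ?p ! j = \<gamma> ! (m - j)" for j using lp by (simp add: rev_nth)
  have sr: "set (steps (rev ?p)) \<subseteq> \<Omega>" "sig (rev ?p) = sig ?p" using sig_rev[OF sp(6)] by auto
  have ne_rp: "rev ?p \<noteq> []" using sp(3) by simp
  have notin: "?c \<notin> set (rev ?p)"
  proof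
    assume "?c \<in> set (rev ?p)"
    then have "?c \<in> set ?p" by simp
    then obtain j where j: "j < Suc m" "?p ! j = ?c" using lp by (metis in_set_conv_nth)
    then have "(\<gamma> ! j) 0 = (\<gamma> ! m) 0 - u 0" by simp
    moreover have "(\<gamma> ! m) 0 \<le> (\<gamma> ! j) 0" using mn m j by (meson le_trans less_Suc_eq_le)
    ultimately show False using ux by simp
  qed
  have stc: "steps (?c # rev ?p) = u # steps (rev ?p)" using steps_Cons[OF ne_rp] hp by simp
  have sc: "set (steps (?c # rev ?p)) \<subseteq> \<Omega>" using stc sr uO by simp
  have sigc: "sig (?c # rev ?p) = \<rho> u * sig ?p" using sig_Cons_new[OF notin ne_rp] hp sr by simp
  have w1s: "sig w1 = \<rho> u * sig ?p" "set (steps w1) \<subseteq> \<Omega>" unfolding w1_def using sig_trans[OF sc, of ?c] sigc by auto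
  have lw1: "length w1 = Suc (Suc m)" using lp by (simp add: w1_def)
  have w1n: "j \<le> m \<Longrightarrow> w1 ! Suc j = \<gamma> ! (m - j) - ?c" for j using rpn lp by (simp add: w1_def)
  show "w1 \<in> HS (Suc m)"
    unfolding HS_def
  proof (intro CollectI conjI ballI)
    show "w1 \<in> W (Suc m)" using lw1 w1s by (simp add: walks_iff w1_def origin_zero)
    fix i assume i: "i \<in> {1..Suc m}"
    then obtain j where j: "i = Suc j" "j \<le> m" by (cases i) auto
    have "(\<gamma> ! m) 0 \<le> (\<gamma> ! (m - j)) 0" using mn m by simp
    then show "0 < (w1 ! i) 0" using w1n[OF j(2)] j(1) ux by simp
  qed
  have sq: "set (steps q) \<subseteq> \<Omega>" "sig q = sig ?r" unfolding q_def using sig_trans[OF sp(7)] by auto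
  have qn: "j \<le> n - m \<Longrightarrow> q ! j = \<gamma> ! (m + j) - \<gamma> ! m" for j using l m by (simp add: q_def)
  have lq: "length q = Suc (n - m)" using sp(9) by (simp add: q_def)
  show "q \<in> HS (n - m)"
    unfolding HS_def
  proof (intro CollectI conjI ballI)
    show "q \<in> W (n - m)" using lq sq qn[of 0] by (cases q) (auto simp: walks_iff origin_zero)
    fix j assume j: "j \<in> {1..n - m}"
    then show "0 < (q ! j) 0" using qn[of j] lt by auto
  qed
  have "hd ?r \<notin> set (tl ?r)"
  proof
    assume "hd ?r \<in> set (tl ?r)"
    moreover have "length (tl ?r) = n - m" using l m by simp
    ultimately obtain j where "j < n - m" "tl ?r ! j = \<gamma> ! m" using sp(5) by (metis in_set_conv_nth)
    then have "\<gamma> ! (Suc m + j) = \<gamma> ! m" using l m by (simp add: nth_tl)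
    moreover have "(\<gamma> ! m) 0 < (\<gamma> ! (Suc m + j)) 0" using lt \<open>j < n - m\<close> by auto
    ultimately show False by simp
  qed
  then have "sig (?p @ tl ?r) \<le> sig ?p * sig ?r"
    using sig_join(1)[OF sp(3,4,2) _ sp(6,7)] by simp
  then have "sig \<gamma> \<le> sig ?p * sig q" using sp(1) sq by simp
  then have "\<rho> u * sig \<gamma> \<le> \<rho> u * (sig ?p * sig q)" using upos by simp
  then show "\<rho> u * sig \<gamma> \<le> sig w1 * sig q" using w1s by (simp add: ac_simps)
  have lastw1: "last w1 = - ?c" using lrp ne_rp by (simp add: w1_def last_map)
  have tlw: "map (\<lambda>v. v - last w1) (tl w1) = rev ?p" unfolding lastw1 by (simp add: w1_def comp_def)
  have lp2: "last ?p = \<gamma> ! m" using sp(2,5) by simp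
  have "map (\<lambda>v. v + \<gamma> ! m) q = ?r" by (simp add: q_def comp_def)
  then show "\<gamma> = rev (map (\<lambda>v. v - last w1) (tl w1)) @ tl (map (\<lambda>v. v + last (rev (map (\<lambda>v. v - last w1) (tl w1)))) q)"
    unfolding tlw using sp(1) lp2 by simp
qed


definition hs where "hs n = (\<Sum>\<gamma>\<in>HS n. sig \<gamma>)"

lemma hs_nonneg: "0 \<le> hs n"
  unfolding hs_def by (rule sum_nonneg) (auto simp: sigHS)

lemma Z_bound: "\<rho> u * Zn \<Omega> \<phi> \<rho> n \<le> (\<Sum>m\<in>{0..n}. hs (Suc m) * hs (n - m))"
proof -
  define mm where "mm \<gamma> = Max {i. i \<le> n \<and> (\<forall>j\<le>n. (\<gamma> ! i) 0 \<le> (\<gamma> ! j) 0)}" for \<gamma> :: "pt list"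
  define w1 where "w1 \<gamma> = map (\<lambda>v. v - (\<gamma> ! mm \<gamma> - u)) ((\<gamma> ! mm \<gamma> - u) # rev (take (Suc (mm \<gamma>)) \<gamma>))" for \<gamma>
  define qq where "qq \<gamma> = map (\<lambda>v. v - \<gamma> ! mm \<gamma>) (drop (mm \<gamma>) \<gamma>)" for \<gamma>
  let ?S = "Sigma {0..n} (\<lambda>m. HS (Suc m) \<times> HS (n - m))"
  have P: "mm \<gamma> \<le> n \<and> (\<forall>j\<le>n. (\<gamma> ! mm \<gamma>) 0 \<le> (\<gamma> ! j) 0) \<and> (\<forall>j. mm \<gamma> < j \<and> j \<le> n \<longrightarrow> (\<gamma> ! mm \<gamma>) 0 < (\<gamma> ! j) 0)"
    for \<gamma> :: "pt list"
  proof -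
    let ?I = "{i. i \<le> n \<and> (\<forall>j\<le>n. (\<gamma> ! i) 0 \<le> (\<gamma> ! j) 0)}"
    let ?V = "(\<lambda>j. (\<gamma> ! j) 0) ` {..n}"
    have "Min ?V \<in> ?V" by (rule Min_in) auto
    then obtain i where i: "i \<le> n" "(\<gamma> ! i) 0 = Min ?V" by (metis (no_types, lifting) atMost_iff imageE)
    have "\<forall>j\<le>n. (\<gamma> ! i) 0 \<le> (\<gamma> ! j) 0" using i by (auto intro: Min_le)
    then have ne: "?I \<noteq> {}" using i by auto
    have fin: "finite ?I" by simp
    have "mm \<gamma> \<in> ?I" unfolding mm_def using Max_in[OF fin ne] .
    moreover have "\<forall>j. mm \<gamma> < j \<and> j \<le> n \<longrightarrow> (\<gamma> ! mm \<gamma>) 0 < (\<gamma> ! j) 0"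
    proof (intro allI impI)
      fix j assume j: "mm \<gamma> < j \<and> j \<le> n"
      show "(\<gamma> ! mm \<gamma>) 0 < (\<gamma> ! j) 0"
      proof (rule ccontr)
        assume "\<not> (\<gamma> ! mm \<gamma>) 0 < (\<gamma> ! j) 0"
        then have "j \<in> ?I" using j \<open>mm \<gamma> \<in> ?I\<close> by force
        then have "j \<le> mm \<gamma>" unfolding mm_def using fin by (simp add: Max_ge)
        then show False using j by simp
      qed
    qed
    ultimately show ?thesis by simp
  qed
  have D: "w1 \<gamma> \<in> HS (Suc (mm \<gamma>)) \<and> qq \<gamma> \<in> HS (n - mm \<gamma>) \<and> \<rho> u * sig \<gamma> \<le> sig (w1 \<gamma>) * sig (qq \<gamma>)
     \<and> \<gamma> = rev (map (\<lambda>v. v - last (w1 \<gamma>)) (tl (w1 \<gamma>))) @ tl (map (\<lambda>v. v + last (rev (map (\<lambda>v. v - last (w1 \<gamma>)) (tl (w1 \<gamma>))))) (qq \<gamma>))"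
    if g: "\<gamma> \<in> W n" for \<gamma>
    using decomp_two[OF g, of "mm \<gamma>"] P[of \<gamma>] unfolding w1_def qq_def by blast
  have "(\<Sum>\<gamma>\<in>W n. \<rho> u * sig \<gamma>) \<le> (\<Sum>(m, p)\<in>?S. sig (fst p) * sig (snd p))"
  proof (rule sum_inj_le[where f = "\<lambda>\<gamma>. (mm \<gamma>, (w1 \<gamma>, qq \<gamma>))"])
    show "finite ?S" by (auto simp: finite_HS)
    show "inj_on (\<lambda>\<gamma>. (mm \<gamma>, w1 \<gamma>, qq \<gamma>)) (W n)"
    proof (rule inj_onI)
      fix x y assume x: "x \<in> W n" and y: "y \<in> W n" and e: "(mm x, w1 x, qq x) = (mm y, w1 y, qq y)"
      have "w1 x = w1 y" "qq x = qq y" using e by auto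
      then show "x = y" using D[OF x] D[OF y] by metis
    qed
    show "(\<lambda>\<gamma>. (mm \<gamma>, w1 \<gamma>, qq \<gamma>)) ` W n \<subseteq> ?S" using D P by auto
    show "\<And>y. y \<in> ?S \<Longrightarrow> 0 \<le> (case y of (m, p) \<Rightarrow> sig (fst p) * sig (snd p))"
      by (auto simp: sigHS)
    show "\<And>x. x \<in> W n \<Longrightarrow> \<rho> u * sig x \<le> (case (mm x, w1 x, qq x) of (m, p) \<Rightarrow> sig (fst p) * sig (snd p))"
      using D by simp
  qed
  also have "\<dots> = (\<Sum>m\<in>{0..n}. \<Sum>p\<in>HS (Suc m) \<times> HS (n - m). sig (fst p) * sig (snd p))"
    by (rule sum.Sigma[symmetric]) (auto simp: finite_HS)
  also have "\<dots> = (\<Sum>m\<in>{0..n}. hs (Suc m) * hs (n - m))"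
    unfolding hs_def sum_product sum.cartesian_product by (simp add: case_prod_beta)
  finally show ?thesis unfolding Zn_def by (simp add: sum_distrib_left)
qed


lemma HZ: "H n \<le> Zn \<Omega> \<phi> \<rho> n"
  unfolding Hn_def Zn_def by (rule sum_mono2[OF finite_W]) (auto simp: bridges_def sigW)

lemma step_bound:
  fixes n :: nat
  defines "c \<equiv> 3 * sqrt (real (nat R))"
  shows "\<rho> u * Zn \<Omega> \<phi> \<rho> n \<le> real (Suc n) * exp (2 * c * sqrt (real (Suc n))) * H (Suc n)"
proof -
  have c: "0 \<le> c" by (simp add: c_def)
  have hsb: "hs k \<le> exp (c * sqrt (real k)) * H k" for k
    using HS_bound[of k] unfolding hs_def c_def by simp
  have "\<rho> u * Zn \<Omega> \<phi> \<rho> n \<le> (\<Sum>m\<in>{0..n}. hs (Suc m) * hs (n - m))" by (rule Z_bound)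
  also have "\<dots> \<le> (\<Sum>m\<in>{0..n}. exp (2 * c * sqrt (real (Suc n))) * H (Suc n))"
  proof (rule sum_mono)
    fix m assume m: "m \<in> {0..n}"
    have "hs (Suc m) * hs (n - m) \<le> (exp (c * sqrt (real (Suc m))) * H (Suc m)) * (exp (c * sqrt (real (n - m))) * H (n - m))"
      by (intro mult_mono hsb hs_nonneg mult_nonneg_nonneg H_nonneg) auto
    also have "\<dots> = exp (c * sqrt (real (Suc m)) + c * sqrt (real (n - m))) * (H (Suc m) * H (n - m))"
      by (simp add: exp_add)
    also have "\<dots> \<le> exp (2 * c * sqrt (real (Suc n))) * H (Suc n)"
    proof (rule mult_mono)
      have "sqrt (real (Suc m)) \<le> sqrt (real (Suc n))" "sqrt (real (n - m)) \<le> sqrt (real (Suc n))"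
        using m by auto
      then have "c * sqrt (real (Suc m)) + c * sqrt (real (n - m)) \<le> 2 * c * sqrt (real (Suc n))"
        using c mult_left_mono[of "sqrt (real (Suc m))" "sqrt (real (Suc n))" c] mult_left_mono[of "sqrt (real (n - m))" "sqrt (real (Suc n))" c] by linarith
      then show "exp (c * sqrt (real (Suc m)) + c * sqrt (real (n - m))) \<le> exp (2 * c * sqrt (real (Suc n)))" by simp
      have "H (Suc m) * H (n - m) \<le> H (Suc m + (n - m))" by (rule H_supermult)
      then show "H (Suc m) * H (n - m) \<le> H (Suc n)" using m by simp
    qed (auto simp: H_nonneg)
    finally show "hs (Suc m) * hs (n - m) \<le> exp (2 * c * sqrt (real (Suc n))) * H (Suc n)" .
  qed
  also have "\<dots> = real (Suc n) * exp (2 * c * sqrt (real (Suc n))) * H (Suc n)" by simp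
  finally show ?thesis .
qed

lemma main_bound: "\<exists>C>0. \<forall>n. exp (- C * sqrt (real n)) * Zn \<Omega> \<phi> \<rho> n \<le> H n \<and> H n \<le> Zn \<Omega> \<phi> \<rho> n"
proof -
  define c where "c = 3 * sqrt (real (nat R))"
  define L where "L = \<bar>ln (1 / \<rho> u)\<bar>"
  define C where "C = 2 * c + 2 + L + 1"
  have c: "0 \<le> c" by (simp add: c_def)
  have C: "0 < C" using c by (simp add: C_def L_def)
  have key: "Zn \<Omega> \<phi> \<rho> N \<le> exp (C * sqrt (real N)) * H N" for N
  proof (cases N)
    case 0
    have "bridges \<Omega> 0 = W 0" by (auto simp: bridges_def)
    then show ?thesis using 0 by (simp add: Hn_def Zn_def)
  next
    case (Suc n)
    let ?s = "sqrt (real N)"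
    have s1: "1 \<le> ?s" using Suc by simp
    have "\<rho> u * Zn \<Omega> \<phi> \<rho> N \<le> \<rho> u * Zn \<Omega> \<phi> \<rho> n" using Z_mono[of n] Suc upos by simp
    also have "\<dots> \<le> real N * exp (2 * c * ?s) * H N" using step_bound[of n] Suc unfolding c_def by simp
    finally have z: "Zn \<Omega> \<phi> \<rho> N \<le> (1 / \<rho> u) * (real N * exp (2 * c * ?s)) * H N"
      using upos by (simp add: field_simps)
    have r1: "1 / \<rho> u \<le> exp (L * ?s)"
    proof -
      have "1 / \<rho> u = exp (ln (1 / \<rho> u))" using upos by simp
      also have "\<dots> \<le> exp L" by (simp add: L_def)
      also have "\<dots> \<le> exp (L * ?s)" using s1 by (simp add: L_def mult_le_cancel_left1)
      finally show ?thesis .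
    qed
    have r2: "real N \<le> exp (2 * ?s)"
    proof -
      have "?s \<le> exp ?s" using exp_ge_add_one_self[of ?s] by linarith
      then have "?s ^ 2 \<le> exp ?s ^ 2" by (intro power_mono) auto
      moreover have "exp ?s ^ 2 = exp (2 * ?s)" by (simp add: power2_eq_square exp_add[symmetric])
      ultimately show ?thesis by simp
    qed
    have "(1 / \<rho> u) * (real N * exp (2 * c * ?s)) \<le> exp (L * ?s) * (exp (2 * ?s) * exp (2 * c * ?s))"
      using r1 r2 upos by (intro mult_mono) auto
    also have "\<dots> = exp ((L + 2 + 2 * c) * ?s)" by (simp add: exp_add[symmetric] algebra_simps)
    also have "\<dots> \<le> exp (C * ?s)" using s1 by (simp add: C_def mult_right_mono)
    finally have "(1 / \<rho> u) * (real N * exp (2 * c * ?s)) * H N \<le> exp (C * ?s) * H N"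
      using H_nonneg by (rule mult_right_mono)
    then show ?thesis using z by simp
  qed
  show ?thesis
  proof (intro exI[of _ C] conjI allI C)
    fix n
    have "exp (- C * sqrt (real n)) * Zn \<Omega> \<phi> \<rho> n \<le> exp (- C * sqrt (real n)) * (exp (C * sqrt (real n)) * H n)"
      using key[of n] by (intro mult_left_mono) auto
    also have "\<dots> = H n" by (simp add: exp_minus field_simps)
    finally show "exp (- C * sqrt (real n)) * Zn \<Omega> \<phi> \<rho> n \<le> H n" .
    show "H n \<le> Zn \<Omega> \<phi> \<rho> n" by (rule HZ)
  qed
qed

end



theorem proposition3:
  fixes d :: nat and \<Omega> :: "pt set" and \<phi> :: "nat \<Rightarrow> real" and \<rho> :: "pt \<Rightarrow> real"
  assumes "finite \<Omega>"
    and "\<forall>v\<in>\<Omega>. in_Zd d v"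
    and "origin \<notin> \<Omega>"
    and "\<forall>g. is_symmetry d g \<longrightarrow> (\<forall>v\<in>\<Omega>. g v \<in> \<Omega>)"
    and "\<forall>a. \<phi> a \<ge> 0"
    and "\<phi> 0 = 0" and "\<phi> 1 = 0"
    and "\<forall>a b. \<phi> (a + b) \<ge> \<phi> a + \<phi> b"
    and "\<forall>v\<in>\<Omega>. \<rho> v \<ge> 0"
    and "(\<Sum>v\<in>\<Omega>. \<rho> v) = 1"
    and "\<forall>g. is_symmetry d g \<longrightarrow> (\<forall>v\<in>\<Omega>. \<rho> (g v) = \<rho> v)"
  shows "\<exists>C>0. \<forall>n::nat. exp (- C * sqrt (real n)) * Zn \<Omega> \<phi> \<rho> n \<le> Hn \<Omega> \<phi> \<rho> n
                        \<and> Hn \<Omega> \<phi> \<rho> n \<le> Zn \<Omega> \<phi> \<rho> n"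
proof -
  note a = assms
  have symO: "\<And>g v. is_symmetry d g \<Longrightarrow> v \<in> \<Omega> \<Longrightarrow> g v \<in> \<Omega> \<and> \<rho> (g v) = \<rho> v"
    using a(4,11) by blast
  obtain v where v: "v \<in> \<Omega>" "\<rho> v > 0"
  proof -
    have "\<exists>v\<in>\<Omega>. \<rho> v > 0"
    proof (rule ccontr)
      assume "\<not> (\<exists>v\<in>\<Omega>. \<rho> v > 0)"
      then have "(\<Sum>v\<in>\<Omega>. \<rho> v) \<le> 0" by (intro sum_nonpos) auto
      then show False using a(10) by simp
    qed
    then show ?thesis using that by blast
  qed
  have vz: "in_Zd d v" using a(2) v by auto
  have "v \<noteq> origin" using v a(3) by auto
  then obtain j where j: "v j \<noteq> 0" by (auto simp: origin_def fun_eq_iff)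
  have jd: "j < d" using vz j by (auto simp: in_Zd_def) (meson not_le)
  then have dpos: "0 < d" by simp
  have negO: "- w \<in> \<Omega> \<and> \<rho> (- w) = \<rho> w" if w: "w \<in> \<Omega>" for w
  proof -
    have s: "is_symmetry d (sym_map d id (\<lambda>_. -1))"
      unfolding is_symmetry_def by (intro exI[of _ id] exI[of _ "\<lambda>_. -1"]) auto
    have "sym_map d id (\<lambda>_. -1) w = - w"
      using a(2) w by (auto simp: sym_map_def fun_eq_iff in_Zd_def)
    then show ?thesis using symO[OF s w] by simp
  qed
  have reflO: "refl0 w \<in> \<Omega> \<and> \<rho> (refl0 w) = \<rho> w" if w: "w \<in> \<Omega>" for w
  proof -
    let ?s = "\<lambda>i::nat. if i = 0 then -1 else (1::int)"
    have s: "is_symmetry d (sym_map d id ?s)"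
      unfolding is_symmetry_def by (intro exI[of _ id] exI[of _ ?s]) auto
    have "sym_map d id ?s w = refl0 w"
      using a(2) w dpos by (auto simp: sym_map_def fun_eq_iff in_Zd_def refl0_def)
    then show ?thesis using symO[OF s w] by simp
  qed
  define p where "p = (\<lambda>i::nat. if i = 0 then j else if i = j then 0 else i)"
  define s where "s = (\<lambda>i::nat. if i = 0 then sgn (v j) else (1::int))"
  have sy: "is_symmetry d (sym_map d p s)"
    unfolding is_symmetry_def
  proof (intro exI[of _ p] exI[of _ s] conjI)
    show "bij_betw p {..<d} {..<d}"
      by (rule bij_betw_byWitness[where f' = p]) (use jd dpos in \<open>auto simp: p_def\<close>)
    show "\<forall>i<d. s i = 1 \<or> s i = -1" using j by (auto simp: s_def sgn_if)
  qed simp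
  define u where "u = sym_map d p s v"
  have uO: "u \<in> \<Omega>" "\<rho> u = \<rho> v" using symO[OF sy v(1)] by (auto simp: u_def)
  have ux: "u 0 > 0" using dpos j by (simp add: u_def sym_map_def p_def s_def sgn_if)
  interpret wsaw d \<Omega> \<phi> \<rho> u
  proof
    show "finite \<Omega>" by (rule a(1))
    show "\<And>v. v \<in> \<Omega> \<Longrightarrow> in_Zd d v" using a(2) by auto
    show "origin \<notin> \<Omega>" by (rule a(3))
    show "\<And>v. v \<in> \<Omega> \<Longrightarrow> - v \<in> \<Omega> \<and> \<rho> (- v) = \<rho> v" by (rule negO)
    show "\<And>v. v \<in> \<Omega> \<Longrightarrow> refl0 v \<in> \<Omega> \<and> \<rho> (refl0 v) = \<rho> v" by (rule reflO)
    show "\<And>x y. \<phi> x + \<phi> y \<le> \<phi> (x + y)" using a(8) by auto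
    show "\<phi> 0 = 0" "\<phi> 1 = 0" by (rule a(6), rule a(7))
    show "\<And>v. v \<in> \<Omega> \<Longrightarrow> 0 \<le> \<rho> v" using a(9) by auto
    show "(\<Sum>v\<in>\<Omega>. \<rho> v) = 1" by (rule a(10))
    show "u \<in> \<Omega>" "0 < \<rho> u" "0 < u 0" using uO v ux by auto
  qed
  show ?thesis by (rule main_bound)
qed

end
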